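(* For every circuit $c\in\mathsf{ACirc}$, $[\![c]\!]_{op}=\kappa(\iota([\![c]\!]))$.
   Context: Fix a field $k$. Circuits: terms built from generators with sorts: copier $\Delta:(1,2)$, discard $!:(1,0)$, amplifier $\mathsf{s}_r:(1,1)$ ($r\in k$), register $\mathsf{x}:(1,1)$, adder $+:(2,1)$, zero $0:(0,1)$, one $\mathbf{1}:(0,1)$; mirror images $\Delta^{op}:(2,1)$, $!^{op}:(0,1)$, $\mathsf{s}_r^{op}$, $\mathsf{x}^{op}:(1,1)$, $+^{op}:(1,2)$, $0^{op}:(1,0)$, $\mathbf{1}^{op}:(1,0)$; $\mathrm{id}_0:(0,0)$, $\mathrm{id}_1:(1,1)$, $\mathrm{sw}:(2,2)$; closed under sequential composition $;$ and parallel composition $\oplus$; $\mathsf{ACirc}$ is the resulting prop (modulo symmetric monoidal laws). Denotation: $k(x)$ is the field of polynomial fractions over $k$; $[\![c]\!]\subseteq k(x)^n\times k(x)^m$ with $[\![\Delta]\!]=\{(p,(p,p))\}$, $[\![!]\!]=\{(p,\bullet)\}$, $[\![+]\!]=\{((p,q),p+q)\}$, $[\![0]\!]=\{(\bullet,0)\}$, $[\![\mathbf 1]\!]=\{(\bullet,1)\}$, $[\![\mathsf s_r]\!]=\{(p,rp)\}$, $[\![\mathsf x]\!]=\{(p,px)\}$; mirrored generators denote converse relations; $\mathrm{id}_1,\mathrm{sw},\mathrm{id}_0$ denote identity, swap, $\{(\bullet,\bullet)\}$; $;$ is relational composition and $\oplus$ product of relations. Each $[\![c]\!]$ is an affine relation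 (empty, or a translate of a $k(x)$-linear subspace). Operational semantics: states are circuits with a value of $k$ in each register; initial state $c_0$ stores $0$. Transitions $t\vdash c\xrightarrow[w]{v}c'$ at time $t\in\mathbb Z$: $\Delta$: $a/(a,a)$; $!$: $a/\bullet$; $+$: $(a,b)/a+b$; $0$: $\bullet/0$; $\mathsf s_r$: $a/ra$; $\mathsf x$ storing $b$: $a/b$, then stores $a$; $\mathbf 1$: $\bullet/1$ if $t=0$, $\bullet/0$ if $t\ne0$; mirrored generators: same with left/right exchanged; $\mathrm{id}_1$: $a/a$; $\mathrm{sw}$: $(a,b)/(b,a)$; $\mathrm{id}_0$: $\bullet/\bullet$; in $c;d$ the components move at the same time agreeing on the shared middle label; in $c\oplus d$ they move at the same time with labels concatenated. A computation starting at $t\le 0$ is a sequence of transitions from $c_0$ at times $t,t+1,\dots$. An $(n,m)$-trajectory is $\sigma:\mathbb Z\to k^n\times k^m$ that is $(0,0)$ for all sufficiently small indices. $[\![c]\!]_{op}$ is the set of trajectories of infinite computations: $\sigma(i)=(u_i,v_i)$ (labels of the transition at time $i$) for $i\ge t$, and $(0,0)$ for $i<t$. Laurent series: $k((x))$ is the field of maps $\alpha:\mathbb Z\to k$ with $\alpha(i)=0$ for all sufficiently small $i$, pointwise sum and convolution product; $k(x)$ embeds in $k((x))$ (a polynomial as its coefficient sequence, fractions via inverses in $k((x))$). $\iota$ sends $\emptyset$ to $\emptyset$ and an affine relation $a+L\subseteq k(x)^n\times k(x)^m$ to the affine relation $a+\mathrm{span}_{k((x))}(L)\subseteq k((x))^n\times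 k((x))^m$ (via the embedding). $\kappa$ sends a pair $(u,v)$, $u=(\alpha^1,\dots,\alpha^n)\in k((x))^n$, $v=(\beta^1,\dots,\beta^m)\in k((x))^m$, to the trajectory $i\mapsto((\alpha^1(i),\dots,\alpha^n(i)),(\beta^1(i),\dots,\beta^m(i)))$, and is extended to sets elementwise. *)

theory Defs
  imports "HOL-Computational_Algebra.Fraction_Field"
          "HOL-Computational_Algebra.Formal_Laurent_Series"
          "HOL-Computational_Algebra.Polynomial_FPS"
begin

datatype 'k circ =
    Copy | Disc | Amp 'k | Reg | Add | Zero | One
  | CopyOp | DiscOp | AmpOp 'k | RegOp | AddOp | ZeroOp | OneOp
  | Id0 | Id1 | Sw
  | Seq "'k circ" "'k circ"
  | Par "'k circ" "'k circ"

fun sort :: "'k circ \<Rightarrow> (nat \<times> nat) option" where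
  "sort Copy = Some (1,2)"
| "sort Disc = Some (1,0)"
| "sort (Amp r) = Some (1,1)"
| "sort Reg = Some (1,1)"
| "sort Add = Some (2,1)"
| "sort Zero = Some (0,1)"
| "sort One = Some (0,1)"
| "sort CopyOp = Some (2,1)"
| "sort DiscOp = Some (0,1)"
| "sort (AmpOp r) = Some (1,1)"
| "sort RegOp = Some (1,1)"
| "sort AddOp = Some (1,2)"
| "sort ZeroOp = Some (1,0)"
| "sort OneOp = Some (1,0)"
| "sort Id0 = Some (0,0)"
| "sort Id1 = Some (1,1)"
| "sort Sw = Some (2,2)"
| "sort (Seq c d) = (case (sort c, sort d) of
      (Some (n,m), Some (m',l)) \<Rightarrow> (if m = m' then Some (n,l) else None)
    | _ \<Rightarrow> None)"
| "sort (Par c d) = (case (sort c, sort d) of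
      (Some (n,m), Some (n',m')) \<Rightarrow> Some (n+n', m+m')
    | _ \<Rightarrow> None)"

definition rel_seq :: "('a list \<times> 'a list) set \<Rightarrow> ('a list \<times> 'a list) set \<Rightarrow> ('a list \<times> 'a list) set" where
  "rel_seq R S = {(u,w). \<exists>v. (u,v) \<in> R \<and> (v,w) \<in> S}"

definition rel_par :: "('a list \<times> 'a list) set \<Rightarrow> ('a list \<times> 'a list) set \<Rightarrow> ('a list \<times> 'a list) set" where
  "rel_par R S = {(u1 @ u2, v1 @ v2) | u1 u2 v1 v2. (u1,v1) \<in> R \<and> (u2,v2) \<in> S}"

type_synonym 'k ratfun = "'k poly fract"

fun den :: "'k::field circ \<Rightarrow> ('k ratfun list \<times> 'k ratfun list) set" where
  "den Copy = {([p],[p,p]) | p. True}"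
| "den Disc = {([p],[]) | p. True}"
| "den (Amp r) = {([p],[Fraction_Field.Fract [:r:] 1 * p]) | p. True}"
| "den Reg = {([p],[p * Fraction_Field.Fract [:0,1:] 1]) | p. True}"
| "den Add = {([p,q],[p+q]) | p q. True}"
| "den Zero = {([],[0])}"
| "den One = {([],[1])}"
| "den CopyOp = {([p,p],[p]) | p. True}"
| "den DiscOp = {([],[p]) | p. True}"
| "den (AmpOp r) = {([Fraction_Field.Fract [:r:] 1 * p],[p]) | p. True}"
| "den RegOp = {([p * Fraction_Field.Fract [:0,1:] 1],[p]) | p. True}"
| "den AddOp = {([p+q],[p,q]) | p q. True}"
| "den ZeroOp = {([0],[])}"
| "den OneOp = {([1],[])}"
| "den Id0 = {([],[])}"
| "den Id1 = {([p],[p]) | p. True}"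
| "den Sw = {([p,q],[q,p]) | p q. True}"
| "den (Seq c d) = rel_seq (den c) (den d)"
| "den (Par c d) = rel_par (den c) (den d)"

text \<open>The library type 'k fls is exactly the field of maps int to k vanishing
  for all sufficiently small indices, with convolution product.\<close>

definition poly_to_fls :: "'k::field poly \<Rightarrow> 'k fls" where
  "poly_to_fls p = fps_to_fls (fps_of_poly p)"

definition ratfun_to_fls :: "'k::field ratfun \<Rightarrow> 'k fls" where
  "ratfun_to_fls q = (THE f. \<exists>p r. r \<noteq> 0 \<and> q = Fraction_Field.Fract p r \<and> f = poly_to_fls p / poly_to_fls r)"

definition emb_pair :: "'k::field ratfun list \<times> 'k ratfun list \<Rightarrow> 'k fls list \<times> 'k fls list" where
  "emb_pair x = (map ratfun_to_fls (fst x), map ratfun_to_fls (snd x))"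

definition vadd :: "'a::plus list \<times> 'a list \<Rightarrow> 'a list \<times> 'a list \<Rightarrow> 'a list \<times> 'a list" where
  "vadd x y = (map2 (+) (fst x) (fst y), map2 (+) (snd x) (snd y))"

definition vdiff :: "'a::minus list \<times> 'a list \<Rightarrow> 'a list \<times> 'a list \<Rightarrow> 'a list \<times> 'a list" where
  "vdiff x y = (map2 (-) (fst x) (fst y), map2 (-) (snd x) (snd y))"

definition vscale :: "'a::times \<Rightarrow> 'a list \<times> 'a list \<Rightarrow> 'a list \<times> 'a list" where
  "vscale c x = (map ((*) c) (fst x), map ((*) c) (snd x))"

definition vzero :: "nat \<Rightarrow> nat \<Rightarrow> 'a::zero list \<times> 'a list" where
  "vzero n m = (replicate n 0, replicate m 0)"

definition lin_comb :: "nat \<Rightarrow> nat \<Rightarrow> nat \<Rightarrow> (nat \<Rightarrow> 'a::comm_ring_1) \<Rightarrow> (nat \<Rightarrow> 'a list \<times> 'a list) \<Rightarrow> 'a list \<times> 'a list" where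
  "lin_comb n m N c w = foldr (\<lambda>i acc. vadd (vscale (c i) (w i)) acc) [0..<N] (vzero n m)"

text \<open>iota: an affine relation R = a + L over k(x) (with a in R, L = {r - a | r in R})
  is sent to a + span over k((x)) of the embedded L; the empty relation to empty.\<close>
definition iota :: "nat \<Rightarrow> nat \<Rightarrow> ('k::field ratfun list \<times> 'k ratfun list) set
                     \<Rightarrow> ('k fls list \<times> 'k fls list) set" where
  "iota n m R = {z. \<exists>a \<in> R. \<exists>N c r. (\<forall>i<N. r i \<in> R) \<and>
      z = vadd (emb_pair a) (lin_comb n m N c (\<lambda>i. emb_pair (vdiff (r i) a)))}"

definition kappa :: "'k::zero fls list \<times> 'k fls list \<Rightarrow> (int \<Rightarrow> 'k list \<times> 'k list)" where
  "kappa x = (\<lambda>i. (map (\<lambda>\<alpha>. fls_nth \<alpha> i) (fst x), map (\<lambda>\<beta>. fls_nth \<beta> i) (snd x)))"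

text \<open>A state of a circuit c is
  c together with a value in each register; we represent it by the list of the
  register values in left-to-right order of the syntax tree.\<close>
fun nregs :: "'k circ \<Rightarrow> nat" where
  "nregs Reg = 1"
| "nregs RegOp = 1"
| "nregs (Seq c d) = nregs c + nregs d"
| "nregs (Par c d) = nregs c + nregs d"
| "nregs _ = 0"

text \<open>step c t s u v s': at time t, the circuit c in register state s makes a
  transition with left label u, right label v, to register state s'.\<close>
inductive step :: "'k::field circ \<Rightarrow> int \<Rightarrow> 'k list \<Rightarrow> 'k list \<Rightarrow> 'k list \<Rightarrow> 'k list \<Rightarrow> bool" where
  s_Copy: "step Copy t [] [a] [a,a] []"
| s_Disc: "step Disc t [] [a] [] []"
| s_Add: "step Add t [] [a,b] [a+b] []"
| s_Zero: "step Zero t [] [] [0] []"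
| s_Amp: "step (Amp r) t [] [a] [r*a] []"
| s_Reg: "step Reg t [b] [a] [b] [a]"
| s_One: "step One t [] [] [if t = 0 then 1 else 0] []"
| s_CopyOp: "step CopyOp t [] [a,a] [a] []"
| s_DiscOp: "step DiscOp t [] [] [a] []"
| s_AddOp: "step AddOp t [] [a+b] [a,b] []"
| s_ZeroOp: "step ZeroOp t [] [0] [] []"
| s_AmpOp: "step (AmpOp r) t [] [r*a] [a] []"
| s_RegOp: "step RegOp t [b] [b] [a] [a]"
| s_OneOp: "step OneOp t [] [if t = 0 then 1 else 0] [] []"
| s_Id0: "step Id0 t [] [] [] []"
| s_Id1: "step Id1 t [] [a] [a] []"
| s_Sw: "step Sw t [] [a,b] [b,a] []"
| s_Seq: "step c t s1 u w s1' \<Longrightarrow> step d t s2 w v s2' \<Longrightarrow>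
          step (Seq c d) t (s1 @ s2) u v (s1' @ s2')"
| s_Par: "step c t s1 u1 v1 s1' \<Longrightarrow> step d t s2 u2 v2 s2' \<Longrightarrow>
          step (Par c d) t (s1 @ s2) (u1 @ u2) (v1 @ v2) (s1' @ s2')"

definition op_sem :: "nat \<Rightarrow> nat \<Rightarrow> 'k::field circ \<Rightarrow> (int \<Rightarrow> 'k list \<times> 'k list) set" where
  "op_sem n m c = {\<sigma>. \<exists>t \<le> 0. \<exists>S U V.
      S t = replicate (nregs c) 0 \<and>
      (\<forall>i \<ge> t. step c i (S i) (U i) (V i) (S (i+1))) \<and>
      \<sigma> = (\<lambda>i. if i < t then vzero n m else (U i, V i))}"

end

theory Submission
  imports Defs
begin

abbreviation phi :: "'k::field ratfun \<Rightarrow> 'k fls" where "phi \<equiv> ratfun_to_fls"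

lemma poly_to_fls_add: "poly_to_fls (p + q) = poly_to_fls p + poly_to_fls q"
  by (simp add: poly_to_fls_def fps_of_poly_add)
lemma poly_to_fls_mult: "poly_to_fls (p * q) = poly_to_fls p * poly_to_fls q"
  by (simp add: poly_to_fls_def fps_of_poly_mult fls_times_fps_to_fls)
lemma poly_to_fls_diff: "poly_to_fls (p - q) = poly_to_fls p - poly_to_fls q"
  by (metis add_diff_cancel_right' diff_add_cancel poly_to_fls_add)
lemma poly_to_fls_nz: "r \<noteq> 0 \<Longrightarrow> poly_to_fls r \<noteq> 0"
  unfolding poly_to_fls_def by (metis fps_of_poly_0 fps_of_poly_eq_iff fps_to_fls_eq_0_iff)

lemma phi_Fract: assumes "r \<noteq> 0" shows "phi (Fraction_Field.Fract p r) = poly_to_fls p / poly_to_fls r"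
  unfolding ratfun_to_fls_def
proof (rule the_equality)
  show "\<exists>pa ra. ra \<noteq> 0 \<and> Fraction_Field.Fract p r = Fraction_Field.Fract pa ra \<and> poly_to_fls p / poly_to_fls r = poly_to_fls pa / poly_to_fls ra"
    using assms by blast
  fix f assume "\<exists>pa ra. ra \<noteq> 0 \<and> Fraction_Field.Fract p r = Fraction_Field.Fract pa ra \<and> f = poly_to_fls pa / poly_to_fls ra"
  then obtain pa ra where h: "ra \<noteq> 0" "Fraction_Field.Fract p r = Fraction_Field.Fract pa ra" "f = poly_to_fls pa / poly_to_fls ra" by blast
  have "p * ra = pa * r" using h assms eq_fract(1) by blast
  hence "poly_to_fls p * poly_to_fls ra = poly_to_fls pa * poly_to_fls r" by (metis poly_to_fls_mult)
  thus "f = poly_to_fls p / poly_to_fls r" using h(3) frac_eq_eq[OF poly_to_fls_nz[OF h(1)] poly_to_fls_nz[OF assms]]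
    by (simp add: mult.commute)
qed

lemma phi_add: "phi (a + b) = phi a + phi b"
proof (cases a; cases b)
  fix p r p' r' assume h: "a = Fraction_Field.Fract p r" "r \<noteq> 0" "b = Fraction_Field.Fract p' r'" "r' \<noteq> 0"
  show ?thesis using h poly_to_fls_nz[OF h(2)] poly_to_fls_nz[OF h(4)]
    by (simp add: phi_Fract poly_to_fls_add poly_to_fls_mult field_simps)
qed

lemma phi_mult: "phi (a * b) = phi a * phi b"
proof (cases a; cases b)
  fix p r p' r' assume h: "a = Fraction_Field.Fract p r" "r \<noteq> 0" "b = Fraction_Field.Fract p' r'" "r' \<noteq> 0"
  show ?thesis using h poly_to_fls_nz[OF h(2)] poly_to_fls_nz[OF h(4)]
    by (simp add: phi_Fract poly_to_fls_add poly_to_fls_mult field_simps)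
qed

lemma phi_0 [simp]: "phi 0 = 0"
  by (simp add: Zero_fract_def phi_Fract poly_to_fls_def)
lemma phi_1 [simp]: "phi 1 = 1"
  by (simp add: One_fract_def phi_Fract poly_to_fls_def)
lemma phi_uminus: "phi (- a) = - phi a"
  by (metis add_eq_0_iff phi_0 phi_add)
lemma phi_diff: "phi (a - b) = phi a - phi b"
  by (metis diff_conv_add_uminus phi_add phi_uminus)
lemma phi_inverse: "phi (inverse a) = inverse (phi a)"
proof (cases "a = 0")
  case False
  hence "phi a * phi (inverse a) = 1" by (metis phi_1 phi_mult right_inverse)
  thus ?thesis by (metis inverse_unique)
qed simp
lemma phi_divide: "phi (a / b) = phi a / phi b"
  by (simp add: divide_inverse phi_mult phi_inverse)
lemma phi_eq0: "phi a = 0 \<longleftrightarrow> a = 0"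
proof
  assume h: "phi a = 0"
  show "a = 0"
  proof (rule ccontr)
    assume "a \<noteq> 0"
    hence "phi a * phi (inverse a) = 1" by (metis phi_1 phi_mult right_inverse)
    thus False using h by simp
  qed
qed simp
lemma phi_sum: "phi (\<Sum>i\<in>A. f i) = (\<Sum>i\<in>A. phi (f i))"
  by (induction A rule: infinite_finite_induct) (auto simp: phi_add)
lemma phi_const: "phi (Fraction_Field.Fract [:r:] 1) = fls_const r"
  by (simp add: phi_Fract poly_to_fls_def fps_of_poly_const)
lemma phi_X: "phi (Fraction_Field.Fract [:0,1:] 1) = fls_X"
  by (simp add: phi_Fract poly_to_fls_def fps_of_poly_pCons)


definition Hf :: "(nat \<Rightarrow> 'k::field ratfun) set \<Rightarrow> (nat \<Rightarrow> 'k fls) set" where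
  "Hf X = {g. \<exists>a\<in>X. \<exists>N::nat. \<exists>c r. (\<forall>i<N. r i \<in> X) \<and> g = (\<lambda>j. phi (a j) + (\<Sum>i<N. c i * phi (r i j - a j)))}"

definition affF :: "(nat \<Rightarrow> 'a::field) set \<Rightarrow> bool" where
  "affF X = (\<forall>a\<in>X. \<forall>y\<in>X. \<forall>z\<in>X. \<forall>l. (\<lambda>j. a j + l * (y j - z j)) \<in> X)"

definition join :: "nat \<Rightarrow> (nat \<Rightarrow> 'a) \<Rightarrow> (nat \<Rightarrow> 'a) \<Rightarrow> nat \<Rightarrow> 'a" where
  "join k f g = (\<lambda>j. if j < k then f j else g (j - k))"

lemma affFD: "affF X \<Longrightarrow> a \<in> X \<Longrightarrow> y \<in> X \<Longrightarrow> z \<in> X \<Longrightarrow> (\<lambda>j. a j + l * (y j - z j)) \<in> X"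
  unfolding affF_def by blast

lemma sum_split: "(\<Sum>i<(N::nat)+M. f i) = (\<Sum>i<N. f i) + (\<Sum>i<M. (f (N+i) :: 'a::comm_monoid_add))"
  by (induction M) (simp_all add: add.assoc)

lemma HfI: "a \<in> X \<Longrightarrow> (\<forall>i<(N::nat). r i \<in> X) \<Longrightarrow> g = (\<lambda>j. phi (a j) + (\<Sum>i<N. c i * phi (r i j - a j))) \<Longrightarrow> g \<in> Hf X"
  unfolding Hf_def by blast

lemma HfE: assumes "g \<in> Hf X"
  obtains a and N::nat and c r where "a \<in> X" "\<forall>i<N. r i \<in> X" "g = (\<lambda>j. phi (a j) + (\<Sum>i<N. c i * phi (r i j - a j)))"
  using assms unfolding Hf_def by blast

lemma Hf_mono: "X \<subseteq> Y \<Longrightarrow> Hf X \<subseteq> Hf Y"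
  unfolding Hf_def by blast

lemma hf_rel:
  assumes "\<forall>x\<in>X. \<exists>y\<in>Y. \<forall>j\<in>J. x (\<sigma> j) = y (\<tau> j)" "g \<in> Hf X"
  shows "\<exists>h\<in>Hf Y. \<forall>j\<in>J. g (\<sigma> j) = h (\<tau> j)"
proof -
  have ex: "\<forall>x\<in>X. \<exists>y. y \<in> Y \<and> (\<forall>j\<in>J. x (\<sigma> j) = y (\<tau> j))" using assms(1) by blast
  obtain F where F: "\<forall>x\<in>X. F x \<in> Y \<and> (\<forall>j\<in>J. x (\<sigma> j) = F x (\<tau> j))"
    using bchoice[OF ex] by blast
  obtain a and N::nat and c r where h: "a \<in> X" "\<forall>i<N. r i \<in> X" "g = (\<lambda>j. phi (a j) + (\<Sum>i<N. c i * phi (r i j - a j)))"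
    using assms(2) unfolding Hf_def by blast
  let ?h = "\<lambda>j. phi (F a j) + (\<Sum>i<N. c i * phi (F (r i) j - F a j))"
  have Fa: "F a \<in> Y" using F h(1) by blast
  have Fr: "\<forall>i<N. F (r i) \<in> Y" using F h(2) by blast
  have "?h \<in> Hf Y" by (rule HfI[of "F a" _ N "\<lambda>i. F (r i)", OF Fa Fr refl])
  moreover have "\<forall>j\<in>J. g (\<sigma> j) = ?h (\<tau> j)"
  proof
    fix j assume j: "j \<in> J"
    have r: "\<forall>i<N. r i (\<sigma> j) = F (r i) (\<tau> j)" using F h(2) j by blast
    have a: "a (\<sigma> j) = F a (\<tau> j)" using F h(1) j by blast
    have "(\<Sum>i<N. c i * phi (r i (\<sigma> j) - a (\<sigma> j))) = (\<Sum>i<N. c i * phi (F (r i) (\<tau> j) - F a (\<tau> j)))"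
      using r a by (intro sum.cong) auto
    thus "g (\<sigma> j) = ?h (\<tau> j)" using h(3) a by simp
  qed
  ultimately show ?thesis by (intro bexI[of _ ?h]) auto
qed

lemma hf_join:
  assumes "g1 \<in> Hf X" "g2 \<in> Hf Y"
  shows "join k g1 g2 \<in> Hf {join k x y | x y. x \<in> X \<and> y \<in> Y}"
proof -
  obtain a and N::nat and c r where h: "a \<in> X" "\<forall>i<N. r i \<in> X" "g1 = (\<lambda>j. phi (a j) + (\<Sum>i<N. c i * phi (r i j - a j)))"
    using assms(1) unfolding Hf_def by blast
  obtain b and M::nat and d s where h2: "b \<in> Y" "\<forall>i<M. s i \<in> Y" "g2 = (\<lambda>j. phi (b j) + (\<Sum>i<M. d i * phi (s i j - b j)))"
    using assms(2) unfolding Hf_def by blast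
  let ?r = "\<lambda>i. if i < N then join k (r i) b else join k a (s (i - N))"
  let ?c = "\<lambda>i. if i < N then c i else d (i - N)"
  show ?thesis
  proof (rule HfI[of "join k a b" _ "N+M" ?r _ ?c])
    show "join k a b \<in> {join k x y | x y. x \<in> X \<and> y \<in> Y}" using h h2 by blast
    show "\<forall>i<N + M. ?r i \<in> {join k x y | x y. x \<in> X \<and> y \<in> Y}"
    proof (intro allI impI)
      fix i assume i: "i < N + M"
      show "?r i \<in> {join k x y | x y. x \<in> X \<and> y \<in> Y}"
      proof (cases "i < N")
        case False
        hence "s (i - N) \<in> Y" using h2 i by auto
        thus ?thesis using False h by auto
      qed (use h h2 in auto)
    qed
    show "join k g1 g2 = (\<lambda>j. phi (join k a b j) + (\<Sum>i<N + M. ?c i * phi (?r i j - join k a b j)))"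
    proof
      fix j
      show "join k g1 g2 j = phi (join k a b j) + (\<Sum>i<N + M. ?c i * phi (?r i j - join k a b j))"
      proof -
        have s1: "(\<Sum>i<N. ?c i * phi (?r i j - join k a b j)) = (\<Sum>i<N. c i * phi (join k (r i) b j - join k a b j))"
          by (rule sum.cong) auto
        have s2: "(\<Sum>i<M. ?c (N+i) * phi (?r (N+i) j - join k a b j)) = (\<Sum>i<M. d i * phi (join k a (s i) j - join k a b j))"
          by (rule sum.cong) auto
        show ?thesis unfolding sum_split s1 s2 using h(3) h2(3) by (cases "j < k") (simp_all add: join_def)
      qed
    qed
  qed
qed

lemma Hf_constraint: assumes "\<forall>x\<in>X. x p = x q" "g \<in> Hf X" shows "g p = g q"
proof -
  obtain a and N::nat and c r where h: "a \<in> X" "\<forall>i<N. r i \<in> X" "g = (\<lambda>j. phi (a j) + (\<Sum>i<N. c i * phi (r i j - a j)))"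
    using assms(2) unfolding Hf_def by blast
  have "a p = a q" "\<forall>i<N. r i p = r i q" using h assms(1) by auto
  thus ?thesis using h(3) by simp
qed

lemma affF_inter: "affF X \<Longrightarrow> affF (X \<inter> {x. x p = x q})"
  unfolding affF_def by auto

lemma hyperplane:
  assumes aff: "affF X" and g: "g \<in> Hf X" and eq: "g p = g q"
  shows "g \<in> Hf (X \<inter> {x. x p = x q})"
proof -
  obtain a and N::nat and c r where h: "a \<in> X" "\<forall>i<N. r i \<in> X" and gdef: "g = (\<lambda>j. phi (a j) + (\<Sum>i<N. c i * phi (r i j - a j)))"
    using g unfolding Hf_def by blast
  define f where "f = (\<lambda>x::nat \<Rightarrow> 'a ratfun. x p - x q)"
  have gdiff: "g p - g q = phi (f a) + (\<Sum>i<N. c i * phi (f (r i) - f a))"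
    unfolding gdef f_def by (simp add: phi_diff phi_add algebra_simps sum_subtractf[symmetric])
  show ?thesis
  proof (cases "\<forall>i<N. f (r i) = f a")
    case True
    hence "phi (f a) = 0" using gdiff eq by simp
    hence fa: "f a = 0" by (simp add: phi_eq0)
    hence "\<forall>i<N. f (r i) = 0" using True by simp
    thus ?thesis using fa h by (intro HfI[OF _ _ gdef]) (auto simp: f_def)
  next
    case False
    then obtain i0 where i0: "i0 < N" "f (r i0) \<noteq> f a" by blast
    define \<delta> where "\<delta> = f (r i0) - f a"
    have \<delta>: "\<delta> \<noteq> 0" using i0 by (simp add: \<delta>_def)
    define P where "P = (\<lambda>y::nat \<Rightarrow> 'a ratfun. \<lambda>j. y j + (f y / \<delta>) * (a j - r i0 j))"
    have PX: "P y \<in> X \<inter> {x. x p = x q}" if "y \<in> X" for y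
    proof -
      have "r i0 \<in> X" using h i0 by blast
      hence "P y \<in> X" unfolding P_def by (rule affFD[OF aff that h(1)])
      moreover have "f (P y) = 0" using \<delta> unfolding P_def f_def \<delta>_def
        by (simp add: field_simps)
      ultimately show ?thesis by (simp add: f_def)
    qed
    show ?thesis
    proof (rule HfI[of "P a" _ N "\<lambda>i. P (r i)" _ c])
      show "P a \<in> X \<inter> {x. x p = x q}" using PX h by blast
      show "\<forall>i<N. P (r i) \<in> X \<inter> {x. x p = x q}" using PX h by blast
      show "g = (\<lambda>j. phi (P a j) + (\<Sum>i<N. c i * phi (P (r i) j - P a j)))"
      proof
        fix j
        define D where "D = phi (a j - r i0 j)"
        have e: "phi \<delta> \<noteq> 0" using \<delta> by (simp add: phi_eq0)
        have "phi (P a j) + (\<Sum>i<N. c i * phi (P (r i) j - P a j))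
           = phi (a j) + phi (f a) / phi \<delta> * D + (\<Sum>i<N. c i * (phi (r i j - a j) + phi (f (r i) - f a) / phi \<delta> * D))"
          unfolding P_def D_def by (simp add: phi_add phi_diff phi_mult phi_divide algebra_simps diff_divide_distrib)
        also have "\<dots> = g j + D / phi \<delta> * (phi (f a) + (\<Sum>i<N. c i * phi (f (r i) - f a)))"
          unfolding gdef by (simp add: algebra_simps sum.distrib sum_distrib_left sum_divide_distrib)
        also have "\<dots> = g j" using gdiff eq by simp
        finally show "g j = phi (P a j) + (\<Sum>i<N. c i * phi (P (r i) j - P a j))" by simp
      qed
    qed
  qed
qed

lemma hyperplanes:
  assumes "affF X" "g \<in> Hf X" "\<forall>k<(M::nat). g (p k) = g (q k)"
  shows "g \<in> Hf (X \<inter> {x. \<forall>k<M. x (p k) = x (q k)})"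
  using assms(3)
proof (induction M)
  case 0
  then show ?case using assms(2) by simp
next
  case (Suc M)
  have aff: "affF (X \<inter> {x. \<forall>k<M. x (p k) = x (q k)})" using assms(1) unfolding affF_def by auto
  have "g \<in> Hf (X \<inter> {x. \<forall>k<M. x (p k) = x (q k)})" using Suc by simp
  hence "g \<in> Hf ((X \<inter> {x. \<forall>k<M. x (p k) = x (q k)}) \<inter> {x. x (p M) = x (q M)})"
    using hyperplane[OF aff] Suc.prems by simp
  moreover have "(X \<inter> {x. \<forall>k<M. x (p k) = x (q k)}) \<inter> {x. x (p M) = x (q M)} = X \<inter> {x. \<forall>k<Suc M. x (p k) = x (q k)}"
    using less_Suc_eq by auto
  ultimately show ?case by simp
qed

lemma Hf_param:
  "Hf {\<lambda>j. B0 j + (\<Sum>k<(P::nat). p k * B k j) | p. True} = {\<lambda>j. phi (B0 j) + (\<Sum>k<P. q k * phi (B k j)) | q. True}"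
  (is "Hf ?X = ?Y")
proof
  show "Hf ?X \<subseteq> ?Y"
  proof
    fix g assume "g \<in> Hf ?X"
    then obtain a and N::nat and c r where h: "a \<in> ?X" "\<forall>i<N. r i \<in> ?X" and gdef: "g = (\<lambda>j. phi (a j) + (\<Sum>i<N. c i * phi (r i j - a j)))"
      unfolding Hf_def by blast
    obtain p0 where p0: "a = (\<lambda>j. B0 j + (\<Sum>k<P. p0 k * B k j))" using h by blast
    have "\<forall>i<N. \<exists>p. r i = (\<lambda>j. B0 j + (\<Sum>k<P. p k * B k j))" using h by blast
    then obtain pp where pp: "\<forall>i<N. r i = (\<lambda>j. B0 j + (\<Sum>k<P. pp i k * B k j))" by metis
    define q where "q = (\<lambda>k. phi (p0 k) + (\<Sum>i<N. c i * phi (pp i k - p0 k)))"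
    have "g = (\<lambda>j. phi (B0 j) + (\<Sum>k<P. q k * phi (B k j)))"
    proof
      fix j
      have "g j = phi (B0 j) + (\<Sum>k<P. phi (p0 k) * phi (B k j)) + (\<Sum>i<N. c i * (\<Sum>k<P. phi (pp i k - p0 k) * phi (B k j)))"
        unfolding gdef p0 using pp
        by (simp add: phi_add phi_sum phi_mult sum_subtractf[symmetric] left_diff_distrib[symmetric])
      also have "\<dots> = phi (B0 j) + (\<Sum>k<P. q k * phi (B k j))"
        unfolding q_def by (simp add: algebra_simps sum.distrib sum_distrib_left sum_distrib_right sum.swap[of _ "{..<N}"])
      finally show "g j = phi (B0 j) + (\<Sum>k<P. q k * phi (B k j))" .
    qed
    thus "g \<in> ?Y" by blast
  qed
next
  show "?Y \<subseteq> Hf ?X"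
  proof
    fix g assume "g \<in> ?Y"
    then obtain q where q: "g = (\<lambda>j. phi (B0 j) + (\<Sum>k<P. q k * phi (B k j)))" by blast
    let ?a = "\<lambda>j. B0 j + (\<Sum>k<P. 0 * B k j)"
    let ?r = "\<lambda>i j. B0 j + (\<Sum>k<P. (if k = i then 1 else 0) * B k j)"
    show "g \<in> Hf ?X"
    proof (rule HfI[of ?a _ P ?r _ q])
      show "?a \<in> ?X" by (intro CollectI exI[of _ "\<lambda>_. 0"]) simp
      show "\<forall>i<P. ?r i \<in> ?X" by (intro allI impI CollectI exI[of _ "\<lambda>k. if k = _ then 1 else 0"]) simp
      show "g = (\<lambda>j. phi (?a j) + (\<Sum>i<P. q i * phi (?r i j - ?a j)))"
      proof -
        have d: "(\<Sum>k<P. (if k = i then 1 else 0) * B k j) = B i j" if "i < P" for i j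
        proof -
          have "(\<Sum>k<P. (if k = i then 1 else 0) * B k j) = (\<Sum>k<P. if k = i then B k j else 0)"
            by (rule sum.cong) auto
          also have "\<dots> = B i j" using that by (simp add: sum.delta')
          finally show ?thesis .
        qed
        show ?thesis unfolding q by (auto intro!: sum.cong simp: d)
      qed
    qed
  qed
qed


definition vec :: "nat \<Rightarrow> 'a::zero list \<times> 'a list \<Rightarrow> nat \<Rightarrow> 'a" where
  "vec n x = (\<lambda>j. if j < n then fst x ! j else if j - n < length (snd x) then snd x ! (j - n) else 0)"

definition unvec :: "nat \<Rightarrow> nat \<Rightarrow> (nat \<Rightarrow> 'a) \<Rightarrow> 'a list \<times> 'a list" where
  "unvec n m f = (map f [0..<n], map (\<lambda>j. f (n + j)) [0..<m])"

definition lens :: "nat \<Rightarrow> nat \<Rightarrow> ('a list \<times> 'b list) set \<Rightarrow> bool" where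
  "lens n m R = (\<forall>x\<in>R. length (fst x) = n \<and> length (snd x) = m)"

fun lcl :: "'a::field \<Rightarrow> 'a list \<Rightarrow> 'a list \<Rightarrow> 'a list \<Rightarrow> 'a list" where
  "lcl l (x#xs) (y#ys) (z#zs) = (x + l * (y - z)) # lcl l xs ys zs"
| "lcl l _ _ _ = []"

definition lc :: "'a::field \<Rightarrow> 'a list \<times> 'a list \<Rightarrow> 'a list \<times> 'a list \<Rightarrow> 'a list \<times> 'a list \<Rightarrow> 'a list \<times> 'a list" where
  "lc l a y z = (lcl l (fst a) (fst y) (fst z), lcl l (snd a) (snd y) (snd z))"

definition affL :: "('a::field list \<times> 'a list) set \<Rightarrow> bool" where
  "affL R = (\<forall>a\<in>R. \<forall>y\<in>R. \<forall>z\<in>R. \<forall>l. lc l a y z \<in> R)"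

lemma lcl_length: "length ys = length xs \<Longrightarrow> length zs = length xs \<Longrightarrow> length (lcl l xs ys zs) = length xs"
  by (induction l xs ys zs rule: lcl.induct) auto

lemma lcl_nth: "length ys = length xs \<Longrightarrow> length zs = length xs \<Longrightarrow> j < length xs \<Longrightarrow>
   lcl l xs ys zs ! j = xs ! j + l * (ys ! j - zs ! j)"
  by (induction l xs ys zs arbitrary: j rule: lcl.induct) (auto simp: nth_Cons split: nat.split)

lemma lcl_append: "length ys = length xs \<Longrightarrow> length zs = length xs \<Longrightarrow>
   lcl l (xs @ xs') (ys @ ys') (zs @ zs') = lcl l xs ys zs @ lcl l xs' ys' zs'"
  by (induction l xs ys zs rule: lcl.induct) auto

lemma unvec_len [simp]: "length (fst (unvec n m f)) = n" "length (snd (unvec n m f)) = m"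
  by (simp_all add: unvec_def)

lemma unvec_nth: "j < n \<Longrightarrow> fst (unvec n m f) ! j = f j" "j < m \<Longrightarrow> snd (unvec n m f) ! j = f (n + j)"
  by (simp_all add: unvec_def)

lemma unvec_cong: "(\<And>j. j < n + m \<Longrightarrow> f j = g j) \<Longrightarrow> unvec n m f = unvec n m g"
  unfolding unvec_def by (auto intro!: map_cong)

lemma unvec_eqI: assumes "length (fst x) = n" "length (snd x) = m"
  "\<And>j. j < n \<Longrightarrow> fst x ! j = f j" "\<And>j. j < m \<Longrightarrow> snd x ! j = f (n + j)"
  shows "x = unvec n m f"
proof -
  have "fst x = fst (unvec n m f)" by (rule nth_equalityI) (use assms in \<open>auto simp: unvec_nth\<close>)
  moreover have "snd x = snd (unvec n m f)" by (rule nth_equalityI) (use assms in \<open>auto simp: unvec_nth\<close>)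
  ultimately show ?thesis by (simp add: prod_eq_iff)
qed

lemma vec_unvec: "(\<And>j. j \<ge> n + m \<Longrightarrow> f j = 0) \<Longrightarrow> vec n (unvec n m f) = f"
  by (rule ext) (auto simp: vec_def unvec_def)

lemma vec_lo: "j < n \<Longrightarrow> vec n x j = fst x ! j"
  by (simp add: vec_def)
lemma vec_hi: "length (snd x) = m \<Longrightarrow> j < m \<Longrightarrow> vec n x (n + j) = snd x ! j"
  by (simp add: vec_def)

lemma affF_vec:
  assumes "affL R" "lens n m R"
  shows "affF (vec n ` R)"
  unfolding affF_def
proof (intro ballI allI)
  fix a' y' z' l assume "a' \<in> vec n ` R" "y' \<in> vec n ` R" "z' \<in> vec n ` R"
  then obtain a y z where h: "a \<in> R" "y \<in> R" "z \<in> R" "a' = vec n a" "y' = vec n y" "z' = vec n z" by blast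
  have L: "length (fst a) = n" "length (fst y) = n" "length (fst z) = n"
     "length (snd a) = m" "length (snd y) = m" "length (snd z) = m" using assms(2) h unfolding lens_def by auto
  have "lc l a y z \<in> R" using assms(1) h unfolding affL_def by blast
  moreover have "(\<lambda>j. a' j + l * (y' j - z' j)) = vec n (lc l a y z)"
    using L unfolding h vec_def lc_def by (auto simp: lcl_length lcl_nth)
  ultimately show "(\<lambda>j. a' j + l * (y' j - z' j)) \<in> vec n ` R" by blast
qed

lemma affF_join: "affF X \<Longrightarrow> affF Y \<Longrightarrow> affF {join k x y | x y. x \<in> X \<and> y \<in> Y}"
  unfolding affF_def
proof (intro ballI allI)
  fix a y z l
  assume X: "\<forall>a\<in>X. \<forall>y\<in>X. \<forall>z\<in>X. \<forall>l. (\<lambda>j. a j + l * (y j - z j)) \<in> X"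
     and Y: "\<forall>a\<in>Y. \<forall>y\<in>Y. \<forall>z\<in>Y. \<forall>l. (\<lambda>j. a j + l * (y j - z j)) \<in> Y"
     and "a \<in> {join k x y |x y. x \<in> X \<and> y \<in> Y}" "y \<in> {join k x y |x y. x \<in> X \<and> y \<in> Y}" "z \<in> {join k x y |x y. x \<in> X \<and> y \<in> Y}"
  then obtain a1 a2 y1 y2 z1 z2 where h: "a = join k a1 a2" "y = join k y1 y2" "z = join k z1 z2"
    "a1 \<in> X" "y1 \<in> X" "z1 \<in> X" "a2 \<in> Y" "y2 \<in> Y" "z2 \<in> Y" by blast
  have "(\<lambda>j. a j + l * (y j - z j)) = join k (\<lambda>j. a1 j + l * (y1 j - z1 j)) (\<lambda>j. a2 j + l * (y2 j - z2 j))"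
    unfolding h join_def by auto
  moreover have "(\<lambda>j. a1 j + l * (y1 j - z1 j)) \<in> X" using X h by blast
  moreover have "(\<lambda>j. a2 j + l * (y2 j - z2 j)) \<in> Y" using Y h by blast
  ultimately show "(\<lambda>j. a j + l * (y j - z j)) \<in> {join k x y |x y. x \<in> X \<and> y \<in> Y}" by blast
qed

lemma foldr_lc:
  assumes "\<forall>i\<in>set xs. length (fst (w i)) = n \<and> length (snd (w i)) = m"
  shows "foldr (\<lambda>i acc. vadd (vscale (c i) (w i)) acc) xs (vzero n m) =
    (map (\<lambda>j. \<Sum>i\<leftarrow>xs. c i * fst (w i) ! j) [0..<n], map (\<lambda>j. \<Sum>i\<leftarrow>xs. c i * snd (w i) ! j) [0..<m])"
  using assms
proof (induction xs)
  case Nil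
  then show ?case by (simp add: vzero_def map_replicate_const)
next
  case (Cons i xs)
  have L: "length (fst (w i)) = n" "length (snd (w i)) = m" using Cons.prems by auto
  show ?case using Cons L
    by (auto simp: vadd_def vscale_def intro!: nth_equalityI)
qed

lemma lin_comb_eq:
  assumes "\<forall>i<N. length (fst (w i)) = n \<and> length (snd (w i)) = m"
  shows "lin_comb n m N c w =
    (map (\<lambda>j. \<Sum>i<N. c i * fst (w i) ! j) [0..<n], map (\<lambda>j. \<Sum>i<N. c i * snd (w i) ! j) [0..<m])"
proof -
  have e: "(\<Sum>i\<leftarrow>[0..<N]. f i) = (\<Sum>i<N. f i)" for f :: "nat \<Rightarrow> 'a"
    by (simp add: sum_set_upt_conv_sum_list_nat[symmetric] atLeast0LessThan)
  show ?thesis unfolding lin_comb_def using assms by (subst foldr_lc) (auto simp: e)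
qed

definition Gf :: "nat \<Rightarrow> 'k::field ratfun list \<times> 'k ratfun list \<Rightarrow> nat \<Rightarrow> (nat \<Rightarrow> 'k fls) \<Rightarrow> (nat \<Rightarrow> 'k ratfun list \<times> 'k ratfun list) \<Rightarrow> nat \<Rightarrow> 'k fls" where
  "Gf n a N c r = (\<lambda>j. phi (vec n a j) + (\<Sum>i<N. c i * phi (vec n (r i) j - vec n a j)))"

lemma iota_elem:
  assumes "lens n m R" "a \<in> R" "\<forall>i<N. r i \<in> R"
  shows "vadd (emb_pair a) (lin_comb n m N c (\<lambda>i. emb_pair (vdiff (r i) a))) = unvec n m (Gf n a N c r)"
proof -
  have La: "length (fst a) = n" "length (snd a) = m" using assms unfolding lens_def by auto
  have Lr: "\<forall>i<N. length (fst (r i)) = n \<and> length (snd (r i)) = m" using assms unfolding lens_def by auto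
  have Lw: "\<forall>i<N. length (fst (emb_pair (vdiff (r i) a))) = n \<and> length (snd (emb_pair (vdiff (r i) a))) = m"
    using La Lr by (simp add: emb_pair_def vdiff_def)
  show ?thesis
    unfolding lin_comb_eq[OF Lw]
    by (rule unvec_eqI) (use La Lr in \<open>auto simp: vadd_def emb_pair_def vdiff_def Gf_def vec_def phi_diff intro!: sum.cong\<close>)
qed

lemma iota_char:
  assumes "lens n m R"
  shows "iota n m R = unvec n m ` Hf (vec n ` R)"
proof
  show "iota n m R \<subseteq> unvec n m ` Hf (vec n ` R)"
  proof
    fix z assume "z \<in> iota n m R"
    then obtain a and N::nat and c r where h: "a \<in> R" "\<forall>i<N. r i \<in> R"
      "z = vadd (emb_pair a) (lin_comb n m N c (\<lambda>i. emb_pair (vdiff (r i) a)))"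
      unfolding iota_def by blast
    have "Gf n a N c r \<in> Hf (vec n ` R)"
      by (rule HfI[of "vec n a" _ N "\<lambda>i. vec n (r i)" _ c]) (use h in \<open>auto simp: Gf_def\<close>)
    thus "z \<in> unvec n m ` Hf (vec n ` R)" using iota_elem[OF assms h(1,2)] h(3) by auto
  qed
next
  show "unvec n m ` Hf (vec n ` R) \<subseteq> iota n m R"
  proof
    fix z assume "z \<in> unvec n m ` Hf (vec n ` R)"
    then obtain g where g: "g \<in> Hf (vec n ` R)" "z = unvec n m g" by blast
    then obtain a' and N::nat and c r' where h: "a' \<in> vec n ` R" "\<forall>i<N. r' i \<in> vec n ` R"
      "g = (\<lambda>j. phi (a' j) + (\<Sum>i<N. c i * phi (r' i j - a' j)))" unfolding Hf_def by blast
    obtain a where a: "a \<in> R" "a' = vec n a" using h(1) by blast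
    have "\<forall>i<N. \<exists>x. x \<in> R \<and> r' i = vec n x" using h(2) by blast
    then obtain r where r: "\<forall>i<N. r i \<in> R \<and> r' i = vec n (r i)" by metis
    have "g = Gf n a N c r" unfolding h(3) Gf_def a(2) using r by (auto intro!: sum.cong)
    hence "z = vadd (emb_pair a) (lin_comb n m N c (\<lambda>i. emb_pair (vdiff (r i) a)))"
      using iota_elem[OF assms a(1), of N r c] r g(2) by auto
    thus "z \<in> iota n m R" unfolding iota_def using a(1) r by blast
  qed
qed


lemma lens_seq: "lens n m R \<Longrightarrow> lens m l S \<Longrightarrow> lens n l (rel_seq R S)"
  unfolding lens_def rel_seq_def by fastforce

lemma lens_par: "lens n1 m1 R \<Longrightarrow> lens n2 m2 S \<Longrightarrow> lens (n1+n2) (m1+m2) (rel_par R S)"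
  unfolding lens_def rel_par_def by fastforce

lemma iota_lens: assumes "lens n m R" shows "lens n m (iota n m R)"
  unfolding iota_char[OF assms] lens_def by auto

lemma iota_seq:
  assumes LR: "lens n m R" and LS: "lens m l S" and AR: "affL R" and AS: "affL S"
  shows "iota n l (rel_seq R S) = rel_seq (iota n m R) (iota m l S)"
proof -
  define Z where "Z = {join (n+m) x y | x y. x \<in> vec n ` R \<and> y \<in> vec m ` S}"
  define ZC where "ZC = Z \<inter> {x. \<forall>k<m. x (n + k) = x (n + m + k)}"
  have affZ: "affF Z" unfolding Z_def by (rule affF_join[OF affF_vec[OF AR LR] affF_vec[OF AS LS]])
  have LRS: "lens n l (rel_seq R S)" by (rule lens_seq[OF LR LS])
  have ZCe: "x \<in> ZC \<longleftrightarrow> (\<exists>a b. a \<in> R \<and> b \<in> S \<and> snd a = fst b \<and> x = join (n+m) (vec n a) (vec m b))" for x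
  proof
    assume "x \<in> ZC"
    then obtain a b where h: "a \<in> R" "b \<in> S" "x = join (n+m) (vec n a) (vec m b)" "\<forall>k<m. x (n + k) = x (n + m + k)"
      unfolding ZC_def Z_def by blast
    have L: "length (snd a) = m" "length (fst b) = m" using h LR LS unfolding lens_def by auto
    have "snd a = fst b"
    proof (rule nth_equalityI)
      show "length (snd a) = length (fst b)" using L by simp
      fix k assume "k < length (snd a)"
      hence k: "k < m" using L by simp
      have "x (n + k) = snd a ! k" using h(3) k L by (simp add: join_def vec_def)
      moreover have "x (n + m + k) = fst b ! k" using h(3) k L by (simp add: join_def vec_def)
      ultimately show "snd a ! k = fst b ! k" using h(4) k by simp
    qed
    thus "\<exists>a b. a \<in> R \<and> b \<in> S \<and> snd a = fst b \<and> x = join (n+m) (vec n a) (vec m b)" using h by blast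
  next
    assume "\<exists>a b. a \<in> R \<and> b \<in> S \<and> snd a = fst b \<and> x = join (n+m) (vec n a) (vec m b)"
    then obtain a b where h: "a \<in> R" "b \<in> S" "snd a = fst b" "x = join (n+m) (vec n a) (vec m b)" by blast
    have L: "length (snd a) = m" "length (fst b) = m" using h LR LS unfolding lens_def by auto
    have "\<forall>k<m. x (n + k) = x (n + m + k)" using h L by (simp add: join_def vec_def)
    moreover have "x \<in> Z" using h unfolding Z_def by blast
    ultimately show "x \<in> ZC" unfolding ZC_def by blast
  qed
  have key: "join (n+m) (vec n a) (vec m b) (if j < n then j else j + 2 * m) = vec n (fst a, snd b) j"
    if "a \<in> R" "b \<in> S" "j < n + l" for a b j
  proof -
    have L: "length (fst a) = n" "length (snd b) = l" using that LR LS unfolding lens_def by auto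
    show ?thesis
    proof (cases "j < n")
      case False
      have e: "\<not> (j + 2 * m < n + m)" "j + 2 * m - (n + m) - m = j - n" "\<not> (j + 2 * m - (n + m) < m)"
        using False by auto
      show ?thesis unfolding join_def vec_def using False L that(3) e by simp
    qed (simp add: join_def vec_def)
  qed
  show ?thesis
  proof
    show "iota n l (rel_seq R S) \<subseteq> rel_seq (iota n m R) (iota m l S)"
    proof
      fix z assume "z \<in> iota n l (rel_seq R S)"
      then obtain g where g: "g \<in> Hf (vec n ` rel_seq R S)" "z = unvec n l g" unfolding iota_char[OF LRS] by blast
      let ?\<tau> = "\<lambda>j. if j < n then j else j + 2 * m"
      have "\<exists>G\<in>Hf ZC. \<forall>j\<in>{..<n+l}. g (id j) = G (?\<tau> j)"
      proof (rule hf_rel[OF _ g(1)])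
        show "\<forall>x\<in>vec n ` rel_seq R S. \<exists>y\<in>ZC. \<forall>j\<in>{..<n + l}. x (id j) = y (?\<tau> j)"
        proof
          fix x assume "x \<in> vec n ` rel_seq R S"
          then obtain u w v where h: "(u, w) \<in> R" "(w, v) \<in> S" "x = vec n (u, v)" unfolding rel_seq_def by auto
          have "join (n+m) (vec n (u,w)) (vec m (w,v)) \<in> ZC" unfolding ZCe using h by fastforce
          moreover have "\<forall>j\<in>{..<n + l}. x (id j) = join (n+m) (vec n (u,w)) (vec m (w,v)) (?\<tau> j)"
            using key[OF h(1,2)] h(3) by simp
          ultimately show "\<exists>y\<in>ZC. \<forall>j\<in>{..<n + l}. x (id j) = y (?\<tau> j)" by blast
        qed
      qed
      then obtain G where G: "G \<in> Hf ZC" "\<forall>j<n+l. g j = G (?\<tau> j)" by auto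
      have "\<exists>h\<in>Hf (vec n ` R). \<forall>j\<in>{..<n+m}. G (id j) = h (id j)"
      proof (rule hf_rel[OF _ G(1)])
        show "\<forall>x\<in>ZC. \<exists>y\<in>vec n ` R. \<forall>j\<in>{..<n + m}. x (id j) = y (id j)"
        proof
          fix x assume "x \<in> ZC"
          then obtain a b where h: "a \<in> R" "b \<in> S" "snd a = fst b" "x = join (n+m) (vec n a) (vec m b)"
            unfolding ZCe by blast
          show "\<exists>y\<in>vec n ` R. \<forall>j\<in>{..<n + m}. x (id j) = y (id j)"
            by (rule bexI[of _ "vec n a"]) (use h in \<open>auto simp: join_def\<close>)
        qed
      qed
      then obtain h1 where h1: "h1 \<in> Hf (vec n ` R)" "\<forall>j<n+m. G j = h1 j" by auto
      have "\<exists>h\<in>Hf (vec m ` S). \<forall>j\<in>{..<m+l}. G (n + m + j) = h (id j)"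
      proof (rule hf_rel[OF _ G(1)])
        show "\<forall>x\<in>ZC. \<exists>y\<in>vec m ` S. \<forall>j\<in>{..<m + l}. x (n + m + j) = y (id j)"
        proof
          fix x assume "x \<in> ZC"
          then obtain a b where h: "a \<in> R" "b \<in> S" "snd a = fst b" "x = join (n+m) (vec n a) (vec m b)"
            unfolding ZCe by blast
          show "\<exists>y\<in>vec m ` S. \<forall>j\<in>{..<m + l}. x (n + m + j) = y (id j)"
            by (rule bexI[of _ "vec m b"]) (use h in \<open>auto simp: join_def\<close>)
        qed
      qed
      then obtain h2 where h2: "h2 \<in> Hf (vec m ` S)" "\<forall>j<m+l. G (n + m + j) = h2 j" by auto
      have cons: "G (n + k) = G (n + m + k)" if "k < m" for k
        by (rule Hf_constraint[OF _ G(1)]) (use that in \<open>auto simp: ZC_def\<close>)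
      define w where "w = map (\<lambda>k. G (n + k)) [0..<m]"
      have "(fst z, w) = unvec n m h1"
        by (rule unvec_eqI) (use g(2) G(2) h1(2) in \<open>auto simp: w_def unvec_nth\<close>)
      hence 1: "(fst z, w) \<in> iota n m R" unfolding iota_char[OF LR] using h1(1) by auto
      have "(w, snd z) = unvec m l h2"
      proof (rule unvec_eqI)
        fix j assume "j < l"
        have e1: "G (n + m + (m + j)) = h2 (m + j)" using h2(2) \<open>j < l\<close> by simp
        have e2: "g (n + j) = G (n + j + 2 * m)" using G(2) \<open>j < l\<close> by simp
        have e3: "n + m + (m + j) = n + j + 2 * m" by simp
        have "snd z ! j = g (n + j)" using g(2) \<open>j < l\<close> by (simp add: unvec_nth)
        thus "snd (w, snd z) ! j = h2 (m + j)" using e1 e2 e3 by simp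
      qed (use g(2) cons h2(2) in \<open>auto simp: w_def unvec_nth\<close>)
      hence 2: "(w, snd z) \<in> iota m l S" unfolding iota_char[OF LS] using h2(1) by auto
      show "z \<in> rel_seq (iota n m R) (iota m l S)" using 1 2 unfolding rel_seq_def by (cases z) auto
    qed
  next
    show "rel_seq (iota n m R) (iota m l S) \<subseteq> iota n l (rel_seq R S)"
    proof
      fix z assume "z \<in> rel_seq (iota n m R) (iota m l S)"
      then obtain u w v where z: "z = (u, v)" "(u, w) \<in> iota n m R" "(w, v) \<in> iota m l S" unfolding rel_seq_def by auto
      obtain g1 where g1: "g1 \<in> Hf (vec n ` R)" "(u, w) = unvec n m g1" using z(2) unfolding iota_char[OF LR] by auto
      obtain g2 where g2: "g2 \<in> Hf (vec m ` S)" "(w, v) = unvec m l g2" using z(3) unfolding iota_char[OF LS] by auto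
      define G where "G = join (n+m) g1 g2"
      have GZ: "G \<in> Hf Z" unfolding G_def Z_def by (rule hf_join[OF g1(1) g2(1)])
      have "\<forall>k<m. G (n + k) = G (n + m + k)"
      proof (intro allI impI)
        fix k assume k: "k < m"
        have "G (n + k) = w ! k" using g1(2) k by (simp add: G_def join_def unvec_def)
        moreover have "G (n + m + k) = w ! k" using g2(2) k by (simp add: G_def join_def unvec_def)
        ultimately show "G (n + k) = G (n + m + k)" by simp
      qed
      hence GZC: "G \<in> Hf ZC" unfolding ZC_def using hyperplanes[OF affZ GZ, of m "\<lambda>k. n + k" "\<lambda>k. n + m + k"] by simp
      let ?\<sigma> = "\<lambda>j. if j < n then j else j + 2 * m"
      have "\<exists>h\<in>Hf (vec n ` rel_seq R S). \<forall>j\<in>{..<n+l}. G (?\<sigma> j) = h (id j)"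
      proof (rule hf_rel[OF _ GZC])
        show "\<forall>x\<in>ZC. \<exists>y\<in>vec n ` rel_seq R S. \<forall>j\<in>{..<n + l}. x (?\<sigma> j) = y (id j)"
        proof
          fix x assume "x \<in> ZC"
          then obtain a b where h: "a \<in> R" "b \<in> S" "snd a = fst b" "x = join (n+m) (vec n a) (vec m b)"
            unfolding ZCe by blast
          have "(fst a, snd b) \<in> rel_seq R S" using h unfolding rel_seq_def by (cases a; cases b) auto
          thus "\<exists>y\<in>vec n ` rel_seq R S. \<forall>j\<in>{..<n + l}. x (?\<sigma> j) = y (id j)"
            using key[OF h(1,2)] h(4) by auto
        qed
      qed
      then obtain h where h: "h \<in> Hf (vec n ` rel_seq R S)" "\<forall>j<n+l. G (?\<sigma> j) = h j" by auto
      have "(u, v) = unvec n l h"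
      proof (rule unvec_eqI)
        fix j assume j: "j < n"
        thus "fst (u, v) ! j = h j" using g1(2) h(2)[rule_format, of j]
          by (simp add: G_def join_def unvec_def)
      next
        fix j assume j: "j < l"
        have "G (?\<sigma> (n + j)) = g2 (m + j)" unfolding G_def join_def by (simp add: mult_2 add.commute)
        thus "snd (u, v) ! j = h (n + j)" using g2(2) h(2)[rule_format, of "n+j"] j
          by (simp add: unvec_def)
      qed (use g1(2) g2(2) in \<open>auto simp: unvec_def\<close>)
      thus "z \<in> iota n l (rel_seq R S)" unfolding z(1) iota_char[OF LRS] using h(1) by auto
    qed
  qed
qed


lemma map_upt_add: "map f [0..<a+b] = map f [0..<a] @ map (\<lambda>j. f (a + j)) [0..<b]"
  by (rule nth_equalityI) (auto simp: nth_append)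

lemma iota_par:
  assumes LR: "lens n1 m1 R" and LS: "lens n2 m2 S"
  shows "iota (n1+n2) (m1+m2) (rel_par R S) = rel_par (iota n1 m1 R) (iota n2 m2 S)"
proof -
  have LRS: "lens (n1+n2) (m1+m2) (rel_par R S)" by (rule lens_par[OF LR LS])
  show ?thesis
  proof
    show "iota (n1+n2) (m1+m2) (rel_par R S) \<subseteq> rel_par (iota n1 m1 R) (iota n2 m2 S)"
    proof
      fix z assume "z \<in> iota (n1+n2) (m1+m2) (rel_par R S)"
      then obtain g where g: "g \<in> Hf (vec (n1+n2) ` rel_par R S)" "z = unvec (n1+n2) (m1+m2) g"
        unfolding iota_char[OF LRS] by blast
      let ?s1 = "\<lambda>j. if j < n1 then j else j + n2"
      have "\<exists>h\<in>Hf (vec n1 ` R). \<forall>j\<in>{..<n1+m1}. g (?s1 j) = h (id j)"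
      proof (rule hf_rel[OF _ g(1)])
        show "\<forall>x\<in>vec (n1+n2) ` rel_par R S. \<exists>y\<in>vec n1 ` R. \<forall>j\<in>{..<n1+m1}. x (?s1 j) = y (id j)"
        proof
          fix x assume "x \<in> vec (n1+n2) ` rel_par R S"
          then obtain u1 u2 v1 v2 where h: "(u1,v1) \<in> R" "(u2,v2) \<in> S" "x = vec (n1+n2) (u1@u2, v1@v2)"
            unfolding rel_par_def by blast
          have L: "length u1 = n1" "length v1 = m1" "length u2 = n2" "length v2 = m2"
            using h LR LS unfolding lens_def by force+
          show "\<exists>y\<in>vec n1 ` R. \<forall>j\<in>{..<n1+m1}. x (?s1 j) = y (id j)"
            by (rule bexI[of _ "vec n1 (u1,v1)"]) (use h L in \<open>auto simp: vec_def nth_append\<close>)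
        qed
      qed
      then obtain h1 where h1: "h1 \<in> Hf (vec n1 ` R)" "\<forall>j<n1+m1. g (?s1 j) = h1 j" by auto
      let ?s2 = "\<lambda>j. if j < n2 then n1 + j else n1 + n2 + m1 + (j - n2)"
      have "\<exists>h\<in>Hf (vec n2 ` S). \<forall>j\<in>{..<n2+m2}. g (?s2 j) = h (id j)"
      proof (rule hf_rel[OF _ g(1)])
        show "\<forall>x\<in>vec (n1+n2) ` rel_par R S. \<exists>y\<in>vec n2 ` S. \<forall>j\<in>{..<n2+m2}. x (?s2 j) = y (id j)"
        proof
          fix x assume "x \<in> vec (n1+n2) ` rel_par R S"
          then obtain u1 u2 v1 v2 where h: "(u1,v1) \<in> R" "(u2,v2) \<in> S" "x = vec (n1+n2) (u1@u2, v1@v2)"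
            unfolding rel_par_def by blast
          have L: "length u1 = n1" "length v1 = m1" "length u2 = n2" "length v2 = m2"
            using h LR LS unfolding lens_def by force+
          show "\<exists>y\<in>vec n2 ` S. \<forall>j\<in>{..<n2+m2}. x (?s2 j) = y (id j)"
            by (rule bexI[of _ "vec n2 (u2,v2)"]) (use h L in \<open>auto simp: vec_def nth_append\<close>)
        qed
      qed
      then obtain h2 where h2: "h2 \<in> Hf (vec n2 ` S)" "\<forall>j<n2+m2. g (?s2 j) = h2 j" by auto
      have "fst z = fst (unvec n1 m1 h1) @ fst (unvec n2 m2 h2)"
      proof -
        have "\<forall>j<n1. g j = h1 j"
        proof (intro allI impI)
          fix j assume "j < n1" thus "g j = h1 j" using h1(2)[rule_format, of j] by simp
        qed
        moreover have "\<forall>j<n2. g (n1 + j) = h2 j"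
        proof (intro allI impI)
          fix j assume "j < n2" thus "g (n1 + j) = h2 j" using h2(2)[rule_format, of j] by simp
        qed
        ultimately show ?thesis using g(2) by (auto simp: unvec_def map_upt_add intro!: map_cong)
      qed
      moreover have "snd z = snd (unvec n1 m1 h1) @ snd (unvec n2 m2 h2)"
      proof -
        have "snd z = map (\<lambda>j. g (n1 + n2 + j)) [0..<m1] @ map (\<lambda>j. g (n1 + n2 + (m1 + j))) [0..<m2]"
          using g(2) by (simp add: unvec_def map_upt_add)
        also have "\<dots> = snd (unvec n1 m1 h1) @ snd (unvec n2 m2 h2)"
        proof -
          have "\<forall>j<m1. g (n1 + n2 + j) = h1 (n1 + j)"
          proof (intro allI impI)
            fix j assume "j < m1" thus "g (n1 + n2 + j) = h1 (n1 + j)" using h1(2)[rule_format, of "n1 + j"] by (simp add: algebra_simps)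
          qed
          moreover have "\<forall>j<m2. g (n1 + n2 + (m1 + j)) = h2 (n2 + j)"
          proof (intro allI impI)
            fix j assume "j < m2" thus "g (n1 + n2 + (m1 + j)) = h2 (n2 + j)" using h2(2)[rule_format, of "n2 + j"] by (simp add: algebra_simps)
          qed
          ultimately show ?thesis by (auto simp: unvec_def intro!: map_cong)
        qed
        finally show ?thesis .
      qed
      moreover have "unvec n1 m1 h1 \<in> iota n1 m1 R" unfolding iota_char[OF LR] using h1(1) by blast
      moreover have "unvec n2 m2 h2 \<in> iota n2 m2 S" unfolding iota_char[OF LS] using h2(1) by blast
      ultimately show "z \<in> rel_par (iota n1 m1 R) (iota n2 m2 S)" unfolding rel_par_def
        by (intro CollectI exI[of _ "fst (unvec n1 m1 h1)"] exI[of _ "fst (unvec n2 m2 h2)"]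
              exI[of _ "snd (unvec n1 m1 h1)"] exI[of _ "snd (unvec n2 m2 h2)"]) (simp add: prod_eq_iff)
    qed
  next
    show "rel_par (iota n1 m1 R) (iota n2 m2 S) \<subseteq> iota (n1+n2) (m1+m2) (rel_par R S)"
    proof
      fix z assume "z \<in> rel_par (iota n1 m1 R) (iota n2 m2 S)"
      then obtain u1 u2 v1 v2 where z: "z = (u1@u2, v1@v2)" "(u1,v1) \<in> iota n1 m1 R" "(u2,v2) \<in> iota n2 m2 S"
        unfolding rel_par_def by blast
      obtain g1 where g1: "g1 \<in> Hf (vec n1 ` R)" "(u1, v1) = unvec n1 m1 g1" using z(2) unfolding iota_char[OF LR] by auto
      obtain g2 where g2: "g2 \<in> Hf (vec n2 ` S)" "(u2, v2) = unvec n2 m2 g2" using z(3) unfolding iota_char[OF LS] by auto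
      define G where "G = join (n1+m1) g1 g2"
      define Z where "Z = {join (n1+m1) x y | x y. x \<in> vec n1 ` R \<and> y \<in> vec n2 ` S}"
      have GZ: "G \<in> Hf Z" unfolding G_def Z_def by (rule hf_join[OF g1(1) g2(1)])
      let ?\<sigma> = "\<lambda>j. if j < n1 then j else if j < n1 + n2 then n1 + m1 + (j - n1) else if j < n1 + n2 + m1 then j - n2 else j"
      have "\<exists>h\<in>Hf (vec (n1+n2) ` rel_par R S). \<forall>j\<in>{..<n1+n2+(m1+m2)}. G (?\<sigma> j) = h (id j)"
      proof (rule hf_rel[OF _ GZ])
        show "\<forall>x\<in>Z. \<exists>y\<in>vec (n1+n2) ` rel_par R S. \<forall>j\<in>{..<n1+n2+(m1+m2)}. x (?\<sigma> j) = y (id j)"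
        proof
          fix x assume "x \<in> Z"
          then obtain a b where h: "a \<in> R" "b \<in> S" "x = join (n1+m1) (vec n1 a) (vec n2 b)" unfolding Z_def by blast
          have L: "length (fst a) = n1" "length (snd a) = m1" "length (fst b) = n2" "length (snd b) = m2"
            using h LR LS unfolding lens_def by auto
          have m: "(fst a @ fst b, snd a @ snd b) \<in> rel_par R S" unfolding rel_par_def
            by (intro CollectI exI[of _ "fst a"] exI[of _ "fst b"] exI[of _ "snd a"] exI[of _ "snd b"]) (simp add: h)
          have "\<forall>j\<in>{..<n1+n2+(m1+m2)}. x (?\<sigma> j) = vec (n1+n2) (fst a @ fst b, snd a @ snd b) j"
          proof
            fix j assume j: "j \<in> {..<n1+n2+(m1+m2)}"
            consider "j < n1" | "n1 \<le> j" "j < n1 + n2" | "n1 + n2 \<le> j" "j < n1 + n2 + m1" | "n1 + n2 + m1 \<le> j"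
              by linarith
            thus "x (?\<sigma> j) = vec (n1+n2) (fst a @ fst b, snd a @ snd b) j"
            proof cases
              case 1 thus ?thesis using h L by (simp add: join_def vec_def nth_append)
            next
              case 2
              then obtain k where k: "j = n1 + k" "k < n2" by (metis add_less_cancel_left le_Suc_ex)
              show ?thesis using h L k by (simp add: join_def vec_def nth_append)
            next
              case 3
              then obtain k where k: "j = n1 + n2 + k" "k < m1" by (metis add_less_cancel_left le_Suc_ex)
              show ?thesis using h L k by (simp add: join_def vec_def nth_append)
            next
              case 4
              then obtain k where k: "j = n1 + n2 + m1 + k" "k < m2" using j by (metis add_less_cancel_left le_Suc_ex lessThan_iff add.assoc)
              show ?thesis using h L k by (simp add: join_def vec_def nth_append)
            qed
          qed
          thus "\<exists>y\<in>vec (n1+n2) ` rel_par R S. \<forall>j\<in>{..<n1+n2+(m1+m2)}. x (?\<sigma> j) = y (id j)"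
            using m by auto
        qed
      qed
      then obtain h where h: "h \<in> Hf (vec (n1+n2) ` rel_par R S)" "\<forall>j<n1+n2+(m1+m2). G (?\<sigma> j) = h j" by auto
      have "z = unvec (n1+n2) (m1+m2) h"
      proof (rule unvec_eqI)
        show "length (fst z) = n1 + n2" "length (snd z) = m1 + m2" using z(1) g1(2) g2(2)
          by (auto simp: unvec_def dest!: arg_cong[of _ _ "\<lambda>p. length (fst p)"] arg_cong[of _ _ "\<lambda>p. length (snd p)"])
      next
        fix j assume j: "j < n1 + n2"
        have jj: "j < n1 + n2 + (m1 + m2)" using j by simp
        have "G (?\<sigma> j) = h j" using h(2) jj by blast
        hence "h j = G (?\<sigma> j)" by simp
        thus "fst z ! j = h j" using z(1) g1(2) g2(2) j
          by (auto simp: G_def join_def unvec_def nth_append dest!: arg_cong[of _ _ fst])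
      next
        fix j assume j: "j < m1 + m2"
        have jj: "n1 + n2 + j < n1 + n2 + (m1 + m2)" using j by simp
        have "G (?\<sigma> (n1 + n2 + j)) = h (n1 + n2 + j)" using h(2) jj by blast
        hence "h (n1 + n2 + j) = G (?\<sigma> (n1 + n2 + j))" by simp
        thus "snd z ! j = h (n1 + n2 + j)" using z(1) g1(2) g2(2) j
          by (auto simp: G_def join_def unvec_def nth_append dest!: arg_cong[of _ _ snd])
      qed
      thus "z \<in> iota (n1+n2) (m1+m2) (rel_par R S)" unfolding iota_char[OF LRS] using h(1) by auto
    qed
  qed
qed


lemma sort_SeqD: "sort (Seq c d) = Some (n, l) \<Longrightarrow> \<exists>m. sort c = Some (n, m) \<and> sort d = Some (m, l)"
  by (auto split: option.splits prod.splits if_splits)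

lemma sort_ParD: "sort (Par c d) = Some (n, m) \<Longrightarrow>
   \<exists>n1 m1 n2 m2. sort c = Some (n1, m1) \<and> sort d = Some (n2, m2) \<and> n = n1 + n2 \<and> m = m1 + m2"
  by (auto split: option.splits prod.splits if_splits)

lemma rel_par_I: "p \<in> R \<Longrightarrow> q \<in> S \<Longrightarrow> (fst p @ fst q, snd p @ snd q) \<in> rel_par R S"
  unfolding rel_par_def by (intro CollectI exI[of _ "fst p"] exI[of _ "fst q"] exI[of _ "snd p"] exI[of _ "snd q"]) simp

lemma den_lens: "sort c = Some (n, m) \<Longrightarrow> lens n m (den c)"
proof (induction c arbitrary: n m)
  case (Seq c d)
  then obtain k where "sort c = Some (n, k)" "sort d = Some (k, m)" using sort_SeqD by blast
  thus ?case using Seq.IH lens_seq by fastforce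
next
  case (Par c d)
  then obtain n1 m1 n2 m2 where "sort c = Some (n1, m1)" "sort d = Some (n2, m2)" "n = n1 + n2" "m = m1 + m2"
    using sort_ParD by blast
  thus ?case using Par.IH lens_par by fastforce
qed (auto simp: lens_def)

lemma den_aff: "sort c = Some (n, m) \<Longrightarrow> affL (den c)"
proof (induction c arbitrary: n m)
  case (Seq c d)
  then obtain k where s: "sort c = Some (n, k)" "sort d = Some (k, m)" using sort_SeqD by blast
  have A: "affL (den c)" "affL (den d)" using Seq.IH s by blast+
  show ?case unfolding affL_def
  proof (intro ballI allI)
    fix a y z l assume "a \<in> den (Seq c d)" "y \<in> den (Seq c d)" "z \<in> den (Seq c d)"
    then obtain a1 a2 a3 y1 y2 y3 z1 z2 z3 where h: "a = (a1, a3)" "y = (y1, y3)" "z = (z1, z3)"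
      "(a1, a2) \<in> den c" "(a2, a3) \<in> den d" "(y1, y2) \<in> den c" "(y2, y3) \<in> den d"
      "(z1, z2) \<in> den c" "(z2, z3) \<in> den d" by (auto simp: rel_seq_def)
    have "lc l (a1, a2) (y1, y2) (z1, z2) \<in> den c" using A(1) h unfolding affL_def by blast
    moreover have "lc l (a2, a3) (y2, y3) (z2, z3) \<in> den d" using A(2) h unfolding affL_def by blast
    ultimately show "lc l a y z \<in> den (Seq c d)" unfolding h by (auto simp: rel_seq_def lc_def)
  qed
next
  case (Par c d)
  then obtain n1 m1 n2 m2 where s: "sort c = Some (n1, m1)" "sort d = Some (n2, m2)"
    using sort_ParD by blast
  have A: "affL (den c)" "affL (den d)" using Par.IH s by blast+
  have L: "lens n1 m1 (den c)" "lens n2 m2 (den d)" using den_lens s by blast+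
  show ?case unfolding affL_def
  proof (intro ballI allI)
    fix a y z l assume "a \<in> den (Par c d)" "y \<in> den (Par c d)" "z \<in> den (Par c d)"
    then obtain a1 a2 a3 a4 y1 y2 y3 y4 z1 z2 z3 z4 where h: "a = (a1 @ a2, a3 @ a4)" "y = (y1 @ y2, y3 @ y4)" "z = (z1 @ z2, z3 @ z4)"
      "(a1, a3) \<in> den c" "(a2, a4) \<in> den d" "(y1, y3) \<in> den c" "(y2, y4) \<in> den d"
      "(z1, z3) \<in> den c" "(z2, z4) \<in> den d" by (auto simp: rel_par_def)
    have Ls: "length a1 = n1" "length y1 = n1" "length z1 = n1" "length a3 = m1" "length y3 = m1" "length z3 = m1"
      using L(1) h unfolding lens_def by force+
    have "lc l (a1, a3) (y1, y3) (z1, z3) \<in> den c" using A(1) h unfolding affL_def by blast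
    moreover have "lc l (a2, a4) (y2, y4) (z2, z4) \<in> den d" using A(2) h unfolding affL_def by blast
    moreover have "lc l a y z = (fst (lc l (a1, a3) (y1, y3) (z1, z3)) @ fst (lc l (a2, a4) (y2, y4) (z2, z4)),
                                 snd (lc l (a1, a3) (y1, y3) (z1, z3)) @ snd (lc l (a2, a4) (y2, y4) (z2, z4)))"
      unfolding h lc_def using Ls by (simp add: lcl_append)
    ultimately show "lc l a y z \<in> den (Par c d)" using rel_par_I by simp
  qed
qed (auto simp: affL_def lc_def; simp add: algebra_simps)+


lemma step_len: "step c t s u v s' \<Longrightarrow> sort c = Some (n, m) \<Longrightarrow>
  length u = n \<and> length v = m \<and> length s = nregs c \<and> length s' = nregs c"
proof (induction arbitrary: n m rule: step.induct)
  case (s_Seq c t s1 u w s1' d s2 v s2')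
  then obtain k where "sort c = Some (n, k)" "sort d = Some (k, m)" using sort_SeqD by blast
  thus ?case using s_Seq.IH by fastforce
next
  case (s_Par c t s1 u1 v1 s1' d s2 u2 v2 s2')
  then obtain n1 m1 n2 m2 where "sort c = Some (n1, m1)" "sort d = Some (n2, m2)" "n = n1 + n2" "m = m1 + m2"
    using sort_ParD by blast
  thus ?case using s_Par.IH by fastforce
qed auto

lemma zero_step: "sort c = Some (n, m) \<Longrightarrow> t \<noteq> 0 \<Longrightarrow>
  step c t (replicate (nregs c) 0) (replicate n 0) (replicate m 0) (replicate (nregs c) 0)"
proof (induction c arbitrary: n m)
  case (Seq c d)
  then obtain k where s: "sort c = Some (n, k)" "sort d = Some (k, m)" using sort_SeqD by blast
  have "step (Seq c d) t (replicate (nregs c) 0 @ replicate (nregs d) 0) (replicate n 0) (replicate m 0)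
          (replicate (nregs c) 0 @ replicate (nregs d) 0)"
    by (rule s_Seq) (use Seq.IH s Seq.prems in auto)
  thus ?case by (simp add: replicate_add)
next
  case (Par c d)
  then obtain n1 m1 n2 m2 where s: "sort c = Some (n1, m1)" "sort d = Some (n2, m2)" "n = n1 + n2" "m = m1 + m2"
    using sort_ParD by blast
  have "step (Par c d) t (replicate (nregs c) 0 @ replicate (nregs d) 0) (replicate n1 0 @ replicate n2 0)
          (replicate m1 0 @ replicate m2 0) (replicate (nregs c) 0 @ replicate (nregs d) 0)"
    by (rule s_Par) (use Par.IH s Par.prems in auto)
  thus ?case using s by (simp add: replicate_add)
next
  case AddOp
  thus ?case using s_AddOp[of t "0::'a" 0] by (auto simp: numeral_2_eq_2)
next
  case One
  thus ?case using s_One[of t] by auto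
next
  case OneOp
  thus ?case using s_OneOp[of t] by auto
qed (auto intro: step.intros simp: numeral_2_eq_2 step.s_Copy[where a=0, simplified] step.s_CopyOp[where a=0, simplified]
   step.s_Add[where a=0 and b=0, simplified] step.s_Amp[where a=0, simplified] step.s_AmpOp[where a=0, simplified]
   step.s_Reg[where a=0 and b=0, simplified] step.s_RegOp[where a=0 and b=0, simplified] step.s_Sw[where a=0 and b=0, simplified])

definition compu :: "'k::field circ \<Rightarrow> nat \<Rightarrow> nat \<Rightarrow> int \<Rightarrow> (int \<Rightarrow> 'k list \<times> 'k list) \<Rightarrow> bool" where
  "compu c n m t \<sigma> = (\<exists>S. S t = replicate (nregs c) 0 \<and> (\<forall>i\<ge>t. step c i (S i) (fst (\<sigma> i)) (snd (\<sigma> i)) (S (i+1)))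
      \<and> (\<forall>i<t. \<sigma> i = vzero n m))"

lemma op_sem_comp: "op_sem n m c = {\<sigma>. \<exists>t\<le>0. compu c n m t \<sigma>}"
proof (intro set_eqI iffI)
  fix \<sigma> assume "\<sigma> \<in> op_sem n m c"
  then obtain t S U V where h: "t \<le> 0" "S t = replicate (nregs c) 0" "\<forall>i\<ge>t. step c i (S i) (U i) (V i) (S (i+1))"
    "\<sigma> = (\<lambda>i. if i < t then vzero n m else (U i, V i))" unfolding op_sem_def by blast
  have "compu c n m t \<sigma>" unfolding compu_def using h by (intro exI[of _ S]) auto
  thus "\<sigma> \<in> {\<sigma>. \<exists>t\<le>0. compu c n m t \<sigma>}" using h(1) by blast
next
  fix \<sigma> assume "\<sigma> \<in> {\<sigma>. \<exists>t\<le>0. compu c n m t \<sigma>}"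
  then obtain t S where h: "t \<le> 0" "S t = replicate (nregs c) 0" "\<forall>i\<ge>t. step c i (S i) (fst (\<sigma> i)) (snd (\<sigma> i)) (S (i+1))"
    "\<forall>i<t. \<sigma> i = vzero n m" unfolding compu_def by blast
  have "\<sigma> = (\<lambda>i. if i < t then vzero n m else (fst (\<sigma> i), snd (\<sigma> i)))" using h(4) by auto
  hence "\<exists>S U V. S t = replicate (nregs c) 0 \<and> (\<forall>i\<ge>t. step c i (S i) (U i) (V i) (S (i + 1))) \<and>
      \<sigma> = (\<lambda>i. if i < t then vzero n m else (U i, V i))"
    using h(2,3) by (intro exI[of _ S] exI[of _ "\<lambda>i. fst (\<sigma> i)"] exI[of _ "\<lambda>i. snd (\<sigma> i)"]) simp
  thus "\<sigma> \<in> op_sem n m c" unfolding op_sem_def using h(1) by blast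
qed

lemma compu_mono:
  assumes "sort c = Some (n, m)" "compu c n m t \<sigma>" "t' \<le> t" "t \<le> 0"
  shows "compu c n m t' \<sigma>"
proof -
  obtain S where h: "S t = replicate (nregs c) 0" "\<forall>i\<ge>t. step c i (S i) (fst (\<sigma> i)) (snd (\<sigma> i)) (S (i+1))"
      "\<forall>i<t. \<sigma> i = vzero n m" using assms(2) unfolding compu_def by blast
  define S' where "S' = (\<lambda>i. if i < t then replicate (nregs c) 0 else S i)"
  have "\<forall>i\<ge>t'. step c i (S' i) (fst (\<sigma> i)) (snd (\<sigma> i)) (S' (i+1))"
  proof (intro allI impI)
    fix i assume "t' \<le> i"
    show "step c i (S' i) (fst (\<sigma> i)) (snd (\<sigma> i)) (S' (i+1))"
    proof (cases "i < t")
      case True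
      have "S' (i+1) = replicate (nregs c) 0"
      proof (cases "i + 1 < t")
        case False
        hence "i + 1 = t" using True by arith
        thus ?thesis using h(1) by (simp add: S'_def)
      qed (simp add: S'_def)
      moreover have "\<sigma> i = vzero n m" using h(3) True by simp
      moreover have "i \<noteq> 0" using True assms(4) by simp
      ultimately show ?thesis using zero_step[OF assms(1)] True by (simp add: S'_def vzero_def)
    next
      case False
      thus ?thesis using h(2) by (simp add: S'_def)
    qed
  qed
  moreover have "S' t' = replicate (nregs c) 0"
  proof (cases "t' < t")
    case False
    hence "t' = t" using assms(3) by simp
    thus ?thesis using h(1) by (simp add: S'_def)
  qed (simp add: S'_def)
  moreover have "\<forall>i<t'. \<sigma> i = vzero n m" using h(3) assms(3) by simp
  ultimately show ?thesis unfolding compu_def by blast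
qed

definition tseq :: "(int \<Rightarrow> 'a list \<times> 'a list) set \<Rightarrow> (int \<Rightarrow> 'a list \<times> 'a list) set \<Rightarrow> (int \<Rightarrow> 'a list \<times> 'a list) set" where
  "tseq A B = {\<sigma>. \<exists>\<tau>1\<in>A. \<exists>\<tau>2\<in>B. (\<forall>i. snd (\<tau>1 i) = fst (\<tau>2 i)) \<and> \<sigma> = (\<lambda>i. (fst (\<tau>1 i), snd (\<tau>2 i)))}"

definition tpar :: "(int \<Rightarrow> 'a list \<times> 'a list) set \<Rightarrow> (int \<Rightarrow> 'a list \<times> 'a list) set \<Rightarrow> (int \<Rightarrow> 'a list \<times> 'a list) set" where
  "tpar A B = {\<sigma>. \<exists>\<tau>1\<in>A. \<exists>\<tau>2\<in>B. \<sigma> = (\<lambda>i. (fst (\<tau>1 i) @ fst (\<tau>2 i), snd (\<tau>1 i) @ snd (\<tau>2 i)))}"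

inductive_cases seqE: "step (Seq c d) t s u v s'"
inductive_cases parE: "step (Par c d) t s u v s'"

lemma seq_inv:
  assumes "step (Seq c d) i s u v s'" "sort c = Some (n, k)"
  shows "\<exists>w. step c i (take (nregs c) s) u w (take (nregs c) s') \<and> step d i (drop (nregs c) s) w v (drop (nregs c) s')"
  using assms(1)
proof (rule seqE)
  fix s1 w s1' s2 s2'
  assume h: "s = s1 @ s2" "s' = s1' @ s2'" "step c i s1 u w s1'" "step d i s2 w v s2'"
  have "length s1 = nregs c" "length s1' = nregs c" using step_len[OF h(3) assms(2)] by auto
  thus ?thesis using h by auto
qed

lemma par_inv:
  assumes "step (Par c d) i s u v s'" "sort c = Some (n1, m1)" "sort d = Some (n2, m2)"
  shows "step c i (take (nregs c) s) (take n1 u) (take m1 v) (take (nregs c) s') \<and>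
         step d i (drop (nregs c) s) (drop n1 u) (drop m1 v) (drop (nregs c) s')"
  using assms(1)
proof (rule parE)
  fix s1 u1 v1 s1' s2 u2 v2 s2'
  assume h: "s = s1 @ s2" "u = u1 @ u2" "v = v1 @ v2" "s' = s1' @ s2'" "step c i s1 u1 v1 s1'" "step d i s2 u2 v2 s2'"
  have "length s1 = nregs c" "length s1' = nregs c" "length u1 = n1" "length v1 = m1"
    using step_len[OF h(5) assms(2)] by auto
  thus ?thesis using h by auto
qed

lemma op_sem_seq:
  assumes sc: "sort c = Some (n, k)" and sd: "sort d = Some (k, l)"
  shows "op_sem n l (Seq c d) = tseq (op_sem n k c) (op_sem k l d)"
proof
  have sS: "sort (Seq c d) = Some (n, l)" using sc sd by simp
  show "op_sem n l (Seq c d) \<subseteq> tseq (op_sem n k c) (op_sem k l d)"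
  proof
    fix \<sigma> assume "\<sigma> \<in> op_sem n l (Seq c d)"
    then obtain t S where h: "t \<le> 0" "S t = replicate (nregs (Seq c d)) 0"
      "\<forall>i\<ge>t. step (Seq c d) i (S i) (fst (\<sigma> i)) (snd (\<sigma> i)) (S (i+1))" "\<forall>i<t. \<sigma> i = vzero n l"
      unfolding op_sem_comp compu_def by blast
    let ?P = "\<lambda>i w. step c i (take (nregs c) (S i)) (fst (\<sigma> i)) w (take (nregs c) (S (i+1))) \<and>
                    step d i (drop (nregs c) (S i)) w (snd (\<sigma> i)) (drop (nregs c) (S (i+1)))"
    define W where "W = (\<lambda>i. if i < t then replicate k 0 else (SOME w. ?P i w))"
    have PW: "?P i (W i)" if "i \<ge> t" for i
    proof -
      have ex: "\<exists>w. ?P i w" using seq_inv[OF h(3)[rule_format, OF that] sc] by blast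
      have "?P i (SOME w. ?P i w)" by (rule someI_ex[OF ex])
      thus ?thesis using that unfolding W_def by simp
    qed
    define \<tau>1 where "\<tau>1 = (\<lambda>i. (fst (\<sigma> i), W i))"
    define \<tau>2 where "\<tau>2 = (\<lambda>i. (W i, snd (\<sigma> i)))"
    have "compu c n k t \<tau>1" unfolding compu_def
      by (rule exI[of _ "\<lambda>i. take (nregs c) (S i)"]) (use h PW in \<open>auto simp: \<tau>1_def W_def vzero_def\<close>)
    hence 1: "\<tau>1 \<in> op_sem n k c" unfolding op_sem_comp using h(1) by blast
    have "compu d k l t \<tau>2" unfolding compu_def
      by (rule exI[of _ "\<lambda>i. drop (nregs c) (S i)"]) (use h PW in \<open>auto simp: \<tau>2_def W_def vzero_def\<close>)
    hence 2: "\<tau>2 \<in> op_sem k l d" unfolding op_sem_comp using h(1) by blast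
    show "\<sigma> \<in> tseq (op_sem n k c) (op_sem k l d)" unfolding tseq_def
      by (intro CollectI bexI[OF _ 1] bexI[OF _ 2] conjI) (simp_all add: \<tau>1_def \<tau>2_def)
  qed
  show "tseq (op_sem n k c) (op_sem k l d) \<subseteq> op_sem n l (Seq c d)"
  proof
    fix \<sigma> assume "\<sigma> \<in> tseq (op_sem n k c) (op_sem k l d)"
    then obtain \<tau>1 \<tau>2 where h: "\<tau>1 \<in> op_sem n k c" "\<tau>2 \<in> op_sem k l d" "\<forall>i. snd (\<tau>1 i) = fst (\<tau>2 i)"
      "\<sigma> = (\<lambda>i. (fst (\<tau>1 i), snd (\<tau>2 i)))" unfolding tseq_def by blast
    obtain t1 where t1: "t1 \<le> 0" "compu c n k t1 \<tau>1" using h(1) unfolding op_sem_comp by blast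
    obtain t2 where t2: "t2 \<le> 0" "compu d k l t2 \<tau>2" using h(2) unfolding op_sem_comp by blast
    define t where "t = min t1 t2"
    have "compu c n k t \<tau>1" by (rule compu_mono[OF sc t1(2)]) (use t1 in \<open>auto simp: t_def\<close>)
    then obtain S1 where S1: "S1 t = replicate (nregs c) 0" "\<forall>i\<ge>t. step c i (S1 i) (fst (\<tau>1 i)) (snd (\<tau>1 i)) (S1 (i+1))"
      "\<forall>i<t. \<tau>1 i = vzero n k" unfolding compu_def by blast
    have "compu d k l t \<tau>2" by (rule compu_mono[OF sd t2(2)]) (use t2 in \<open>auto simp: t_def\<close>)
    then obtain S2 where S2: "S2 t = replicate (nregs d) 0" "\<forall>i\<ge>t. step d i (S2 i) (fst (\<tau>2 i)) (snd (\<tau>2 i)) (S2 (i+1))"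
      "\<forall>i<t. \<tau>2 i = vzero k l" unfolding compu_def by blast
    have "compu (Seq c d) n l t \<sigma>" unfolding compu_def
    proof (rule exI[of _ "\<lambda>i. S1 i @ S2 i"], intro conjI allI impI)
      show "S1 t @ S2 t = replicate (nregs (Seq c d)) 0" using S1 S2 by (simp add: replicate_add)
    next
      fix i :: int assume "t \<le> i"
      thus "step (Seq c d) i (S1 i @ S2 i) (fst (\<sigma> i)) (snd (\<sigma> i)) (S1 (i + 1) @ S2 (i + 1))"
        using S1(2) S2(2) h(3,4) by (auto intro!: s_Seq)
    next
      fix i :: int assume "i < t"
      thus "\<sigma> i = vzero n l" using S1(3) S2(3) h(4) by (simp add: vzero_def)
    qed
    moreover have "t \<le> 0" using t1 by (simp add: t_def)
    ultimately show "\<sigma> \<in> op_sem n l (Seq c d)" unfolding op_sem_comp by blast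
  qed
qed

lemma op_sem_par:
  assumes sc: "sort c = Some (n1, m1)" and sd: "sort d = Some (n2, m2)"
  shows "op_sem (n1+n2) (m1+m2) (Par c d) = tpar (op_sem n1 m1 c) (op_sem n2 m2 d)"
proof
  show "op_sem (n1+n2) (m1+m2) (Par c d) \<subseteq> tpar (op_sem n1 m1 c) (op_sem n2 m2 d)"
  proof
    fix \<sigma> assume "\<sigma> \<in> op_sem (n1+n2) (m1+m2) (Par c d)"
    then obtain t S where h: "t \<le> 0" "S t = replicate (nregs (Par c d)) 0"
      "\<forall>i\<ge>t. step (Par c d) i (S i) (fst (\<sigma> i)) (snd (\<sigma> i)) (S (i+1))" "\<forall>i<t. \<sigma> i = vzero (n1+n2) (m1+m2)"
      unfolding op_sem_comp compu_def by blast
    define \<tau>1 where "\<tau>1 = (\<lambda>i. (take n1 (fst (\<sigma> i)), take m1 (snd (\<sigma> i))))"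
    define \<tau>2 where "\<tau>2 = (\<lambda>i. (drop n1 (fst (\<sigma> i)), drop m1 (snd (\<sigma> i))))"
    have "compu c n1 m1 t \<tau>1" unfolding compu_def
      by (rule exI[of _ "\<lambda>i. take (nregs c) (S i)"]) (use h par_inv[OF _ sc sd] in \<open>auto simp: \<tau>1_def vzero_def\<close>)
    hence 1: "\<tau>1 \<in> op_sem n1 m1 c" unfolding op_sem_comp using h(1) by blast
    have "compu d n2 m2 t \<tau>2" unfolding compu_def
      by (rule exI[of _ "\<lambda>i. drop (nregs c) (S i)"]) (use h par_inv[OF _ sc sd] in \<open>auto simp: \<tau>2_def vzero_def\<close>)
    hence 2: "\<tau>2 \<in> op_sem n2 m2 d" unfolding op_sem_comp using h(1) by blast
    show "\<sigma> \<in> tpar (op_sem n1 m1 c) (op_sem n2 m2 d)" unfolding tpar_def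
      by (intro CollectI bexI[OF _ 1] bexI[OF _ 2]) (rule ext, simp add: \<tau>1_def \<tau>2_def)
  qed
  show "tpar (op_sem n1 m1 c) (op_sem n2 m2 d) \<subseteq> op_sem (n1+n2) (m1+m2) (Par c d)"
  proof
    fix \<sigma> assume "\<sigma> \<in> tpar (op_sem n1 m1 c) (op_sem n2 m2 d)"
    then obtain \<tau>1 \<tau>2 where h: "\<tau>1 \<in> op_sem n1 m1 c" "\<tau>2 \<in> op_sem n2 m2 d"
      "\<sigma> = (\<lambda>i. (fst (\<tau>1 i) @ fst (\<tau>2 i), snd (\<tau>1 i) @ snd (\<tau>2 i)))" unfolding tpar_def by blast
    obtain t1 where t1: "t1 \<le> 0" "compu c n1 m1 t1 \<tau>1" using h(1) unfolding op_sem_comp by blast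
    obtain t2 where t2: "t2 \<le> 0" "compu d n2 m2 t2 \<tau>2" using h(2) unfolding op_sem_comp by blast
    define t where "t = min t1 t2"
    have "compu c n1 m1 t \<tau>1" by (rule compu_mono[OF sc t1(2)]) (use t1 in \<open>auto simp: t_def\<close>)
    then obtain S1 where S1: "S1 t = replicate (nregs c) 0" "\<forall>i\<ge>t. step c i (S1 i) (fst (\<tau>1 i)) (snd (\<tau>1 i)) (S1 (i+1))"
      "\<forall>i<t. \<tau>1 i = vzero n1 m1" unfolding compu_def by blast
    have "compu d n2 m2 t \<tau>2" by (rule compu_mono[OF sd t2(2)]) (use t2 in \<open>auto simp: t_def\<close>)
    then obtain S2 where S2: "S2 t = replicate (nregs d) 0" "\<forall>i\<ge>t. step d i (S2 i) (fst (\<tau>2 i)) (snd (\<tau>2 i)) (S2 (i+1))"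
      "\<forall>i<t. \<tau>2 i = vzero n2 m2" unfolding compu_def by blast
    have "compu (Par c d) (n1+n2) (m1+m2) t \<sigma>" unfolding compu_def
    proof (rule exI[of _ "\<lambda>i. S1 i @ S2 i"], intro conjI allI impI)
      show "S1 t @ S2 t = replicate (nregs (Par c d)) 0" using S1 S2 by (simp add: replicate_add)
    next
      fix i :: int assume "t \<le> i"
      thus "step (Par c d) i (S1 i @ S2 i) (fst (\<sigma> i)) (snd (\<sigma> i)) (S1 (i + 1) @ S2 (i + 1))"
        using S1(2) S2(2) h(3) by (auto intro!: s_Par)
    next
      fix i :: int assume "i < t"
      thus "\<sigma> i = vzero (n1+n2) (m1+m2)" using S1(3) S2(3) h(3) by (simp add: vzero_def replicate_add)
    qed
    moreover have "t \<le> 0" using t1 by (simp add: t_def)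
    ultimately show "\<sigma> \<in> op_sem (n1+n2) (m1+m2) (Par c d)" unfolding op_sem_comp by blast
  qed
qed


lemma map_fls_eq:
  assumes "length xs = length ys" "\<forall>i. map (\<lambda>\<alpha>. fls_nth \<alpha> i) xs = map (\<lambda>\<alpha>. fls_nth \<alpha> i) ys"
  shows "xs = ys"
proof (rule nth_equalityI)
  show "length xs = length ys" by fact
  fix j assume j: "j < length xs"
  show "xs ! j = ys ! j"
  proof (rule fls_eqI)
    fix i
    have "map (\<lambda>\<alpha>. fls_nth \<alpha> i) xs ! j = map (\<lambda>\<alpha>. fls_nth \<alpha> i) ys ! j" using assms(2) by simp
    thus "fls_nth (xs ! j) i = fls_nth (ys ! j) i" using j assms(1) by simp
  qed
qed

lemma kappa_seq:
  assumes "\<forall>x\<in>P. length (snd x) = k" "\<forall>x\<in>Q. length (fst x) = k"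
  shows "kappa ` rel_seq P Q = tseq (kappa ` P) (kappa ` Q)"
proof
  show "kappa ` rel_seq P Q \<subseteq> tseq (kappa ` P) (kappa ` Q)"
  proof
    fix \<sigma> assume "\<sigma> \<in> kappa ` rel_seq P Q"
    then obtain u w v where h: "(u, w) \<in> P" "(w, v) \<in> Q" "\<sigma> = kappa (u, v)" unfolding rel_seq_def by auto
    show "\<sigma> \<in> tseq (kappa ` P) (kappa ` Q)" unfolding tseq_def
      by (intro CollectI bexI[OF _ imageI[OF h(1)]] bexI[OF _ imageI[OF h(2)]] conjI) (simp_all add: kappa_def h(3))
  qed
  show "tseq (kappa ` P) (kappa ` Q) \<subseteq> kappa ` rel_seq P Q"
  proof
    fix \<sigma> assume "\<sigma> \<in> tseq (kappa ` P) (kappa ` Q)"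
    then obtain x1 x2 where h: "x1 \<in> P" "x2 \<in> Q" "\<forall>i. snd (kappa x1 i) = fst (kappa x2 i)"
      "\<sigma> = (\<lambda>i. (fst (kappa x1 i), snd (kappa x2 i)))" unfolding tseq_def by blast
    have "snd x1 = fst x2" by (rule map_fls_eq) (use h assms in \<open>auto simp: kappa_def\<close>)
    hence "(fst x1, snd x2) \<in> rel_seq P Q" using h unfolding rel_seq_def by (cases x1; cases x2) auto
    moreover have "\<sigma> = kappa (fst x1, snd x2)" using h(4) by (simp add: kappa_def)
    ultimately show "\<sigma> \<in> kappa ` rel_seq P Q" by blast
  qed
qed

lemma kappa_par: "kappa ` rel_par P Q = tpar (kappa ` P) (kappa ` Q)"
proof
  show "kappa ` rel_par P Q \<subseteq> tpar (kappa ` P) (kappa ` Q)"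
  proof
    fix \<sigma> assume "\<sigma> \<in> kappa ` rel_par P Q"
    then obtain u1 u2 v1 v2 where h: "(u1, v1) \<in> P" "(u2, v2) \<in> Q" "\<sigma> = kappa (u1 @ u2, v1 @ v2)" unfolding rel_par_def by auto
    show "\<sigma> \<in> tpar (kappa ` P) (kappa ` Q)" unfolding tpar_def
      by (intro CollectI bexI[OF _ imageI[OF h(1)]] bexI[OF _ imageI[OF h(2)]]) (simp add: kappa_def h(3))
  qed
  show "tpar (kappa ` P) (kappa ` Q) \<subseteq> kappa ` rel_par P Q"
  proof
    fix \<sigma> assume "\<sigma> \<in> tpar (kappa ` P) (kappa ` Q)"
    then obtain x1 x2 where h: "x1 \<in> P" "x2 \<in> Q"
      "\<sigma> = (\<lambda>i. (fst (kappa x1 i) @ fst (kappa x2 i), snd (kappa x1 i) @ snd (kappa x2 i)))" unfolding tpar_def by blast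
    have "(fst x1 @ fst x2, snd x1 @ snd x2) \<in> rel_par P Q" using h rel_par_I by blast
    moreover have "\<sigma> = kappa (fst x1 @ fst x2, snd x1 @ snd x2)" using h(3) by (simp add: kappa_def)
    ultimately show "\<sigma> \<in> kappa ` rel_par P Q" by blast
  qed
qed

lemma fls_list_bound: "\<exists>t\<le>0. \<forall>\<alpha>\<in>set (xs :: 'a::zero fls list). \<forall>i<t. fls_nth \<alpha> i = 0"
proof (induction xs)
  case (Cons \<alpha> xs)
  then obtain t where t: "t \<le> 0" "\<forall>\<beta>\<in>set xs. \<forall>i<t. fls_nth \<beta> i = 0" by blast
  show ?case
    by (rule exI[of _ "min t (fls_subdegree \<alpha>)"]) (use t in auto)
qed auto

lemma op_sem_stateless:
  assumes nr: "nregs c = 0" and sc: "sort c = Some (n, m)"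
    and E: "\<And>x. x \<in> E \<longleftrightarrow> (length (fst x) = n \<and> length (snd x) = m \<and>
               (\<forall>i. step c i [] (fst (kappa x i)) (snd (kappa x i)) []))"
  shows "op_sem n m c = kappa ` E"
proof
  show "op_sem n m c \<subseteq> kappa ` E"
  proof
    fix \<sigma> assume "\<sigma> \<in> op_sem n m c"
    then obtain t S where h: "t \<le> 0" "S t = replicate (nregs c) 0"
      "\<forall>i\<ge>t. step c i (S i) (fst (\<sigma> i)) (snd (\<sigma> i)) (S (i+1))" "\<forall>i<t. \<sigma> i = vzero n m"
      unfolding op_sem_comp compu_def by blast
    have st: "step c i [] (fst (\<sigma> i)) (snd (\<sigma> i)) []" for i
    proof (cases "i < t")
      case True
      thus ?thesis using zero_step[OF sc, of i] h(1,4) nr by (simp add: vzero_def)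
    next
      case False
      have "length (S i) = 0" "length (S (i+1)) = 0" using step_len[OF h(3)[rule_format] sc] False nr by auto
      moreover have "step c i (S i) (fst (\<sigma> i)) (snd (\<sigma> i)) (S (i+1))" using h(3) False by simp
      ultimately show ?thesis by simp
    qed
    have L: "length (fst (\<sigma> i)) = n" "length (snd (\<sigma> i)) = m" for i using step_len[OF st sc] by auto
    have Z1: "\<forall>i<t. fst (\<sigma> i) ! j = 0" if "j < n" for j
      using h(4) that by (auto simp: vzero_def)
    have Z2: "\<forall>i<t. snd (\<sigma> i) ! j = 0" if "j < m" for j
      using h(4) that by (auto simp: vzero_def)
    have A1: "fls_nth (Abs_fls (\<lambda>i. fst (\<sigma> i) ! j)) i = fst (\<sigma> i) ! j" if "j < n" for i j
      by (rule nth_Abs_fls_lower_bound) (rule Z1[OF that])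
    have A2: "fls_nth (Abs_fls (\<lambda>i. snd (\<sigma> i) ! j)) i = snd (\<sigma> i) ! j" if "j < m" for i j
      by (rule nth_Abs_fls_lower_bound) (rule Z2[OF that])
    define x where "x = (map (\<lambda>j. Abs_fls (\<lambda>i. fst (\<sigma> i) ! j)) [0..<n], map (\<lambda>j. Abs_fls (\<lambda>i. snd (\<sigma> i) ! j)) [0..<m])"
    have "kappa x i = \<sigma> i" for i
    proof -
      have "map (\<lambda>\<alpha>. fls_nth \<alpha> i) (fst x) = fst (\<sigma> i)"
        by (rule nth_equalityI) (use L A1 A2 in \<open>auto simp: x_def\<close>)
      moreover have "map (\<lambda>\<alpha>. fls_nth \<alpha> i) (snd x) = snd (\<sigma> i)"
        by (rule nth_equalityI) (use L A1 A2 in \<open>auto simp: x_def\<close>)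
      ultimately show ?thesis by (simp add: kappa_def prod_eq_iff)
    qed
    hence kx: "kappa x = \<sigma>" by auto
    have "x \<in> E" unfolding E using kx st by (simp add: x_def)
    thus "\<sigma> \<in> kappa ` E" using kx by blast
  qed
  show "kappa ` E \<subseteq> op_sem n m c"
  proof
    fix \<sigma> assume "\<sigma> \<in> kappa ` E"
    then obtain x where x: "x \<in> E" "\<sigma> = kappa x" by blast
    have xe: "length (fst x) = n" "length (snd x) = m" "\<forall>i. step c i [] (fst (kappa x i)) (snd (kappa x i)) []"
      using x(1) E by auto
    obtain t where t: "t \<le> 0" "\<forall>\<alpha>\<in>set (fst x @ snd x). \<forall>i<t. fls_nth \<alpha> i = 0" using fls_list_bound by blast
    have "compu c n m t \<sigma>" unfolding compu_def
    proof (rule exI[of _ "\<lambda>_. []"], intro conjI allI impI)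
      show "[] = replicate (nregs c) 0" using nr by simp
    next
      fix i :: int assume "t \<le> i"
      show "step c i [] (fst (\<sigma> i)) (snd (\<sigma> i)) []" using xe x(2) by simp
    next
      fix i :: int assume i: "i < t"
      have "map (\<lambda>\<alpha>. fls_nth \<alpha> i) (fst x) = replicate n 0"
        by (rule nth_equalityI) (use xe t i in \<open>auto\<close>)
      moreover have "map (\<lambda>\<alpha>. fls_nth \<alpha> i) (snd x) = replicate m 0"
        by (rule nth_equalityI) (use xe t i in \<open>auto\<close>)
      ultimately show "\<sigma> i = vzero n m" using x(2) by (simp add: kappa_def vzero_def)
    qed
    thus "\<sigma> \<in> op_sem n m c" unfolding op_sem_comp using t(1) by blast
  qed
qed

lemma iota_param:
  assumes R: "R = unvec n m ` {\<lambda>j. B0 j + (\<Sum>k<(P::nat). p k * B k j) | p. True}"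
    and Z: "\<And>j. j \<ge> n + m \<Longrightarrow> B0 j = 0 \<and> (\<forall>k. B k j = 0)"
  shows "iota n m R = unvec n m ` {\<lambda>j. phi (B0 j) + (\<Sum>k<P. q k * phi (B k j)) | q. True}"
proof -
  have L: "lens n m R" unfolding R lens_def by auto
  define X where "X = {\<lambda>j. B0 j + (\<Sum>k<P. p k * B k j) | p. True}"
  have vu: "vec n (unvec n m f) = f" if fX: "f \<in> X" for f
  proof -
    obtain p where p: "f = (\<lambda>j. B0 j + (\<Sum>k<P. p k * B k j))" using fX unfolding X_def by blast
    show ?thesis unfolding p by (rule vec_unvec) (use Z in simp)
  qed
  have "vec n ` R = (\<lambda>f. vec n (unvec n m f)) ` X" unfolding R X_def image_image ..
  also have "\<dots> = id ` X" by (rule image_cong) (use vu in auto)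
  finally have "vec n ` R = {\<lambda>j. B0 j + (\<Sum>k<P. p k * B k j) | p. True}" unfolding X_def by simp
  hence "Hf (vec n ` R) = {\<lambda>j. phi (B0 j) + (\<Sum>k<P. q k * phi (B k j)) | q. True}"
    by (simp only: Hf_param)
  thus ?thesis unfolding iota_char[OF L] by simp
qed


lemma img_param:
  assumes "\<forall>p. unvec n m (F p) \<in> R" "\<forall>x\<in>R. x = unvec n m (F (W x))"
  shows "R = unvec n m ` {F p | p. True}"
  using assms by blast

lemma sum1: "(\<Sum>k<Suc 0. f k) = f 0" "(\<Sum>k<(1::nat). f k) = f 0" by simp_all
lemma sum2: "(\<Sum>k<2. f k) = f 0 + f (Suc 0)" by (simp add: numeral_2_eq_2)

lemma unvec_simps:
  "unvec 0 0 f = ([], [])"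
  "unvec 0 (Suc 0) f = ([], [f 0])"
  "unvec (Suc 0) 0 f = ([f 0], [])"
  "unvec (Suc 0) (Suc 0) f = ([f 0], [f 1])"
  "unvec (Suc 0) 2 f = ([f 0], [f 1, f 2])"
  "unvec 2 (Suc 0) f = ([f 0, f 1], [f 2])"
  "unvec 2 2 f = ([f 0, f 1], [f 2, f 3])"
  by (simp_all add: unvec_def numeral_2_eq_2 numeral_3_eq_3 upt_rec)

lemma pw_eq: "(\<forall>i. fls_nth a i = fls_nth b i) \<longleftrightarrow> a = b"
  by (simp add: fls_eq_iff)
lemma pw_add: "(\<forall>i. fls_nth c i = fls_nth a i + fls_nth b i) \<longleftrightarrow> c = a + b"
  by (simp add: fls_eq_iff)

inductive_cases CopyE: "step Copy t s u v s'"

lemma iota_Copy: "iota 1 2 (den Copy) = {([\<alpha>], [\<alpha>, \<alpha>]) | \<alpha>. True}"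
proof -
  have "den Copy = unvec 1 2 ` {\<lambda>j. 0 + (\<Sum>k<(1::nat). p k * (if j < 3 then 1 else 0)) | p. True}"
    by (rule img_param[where W = "\<lambda>x k. hd (fst x)"]) (auto simp: unvec_simps sum1 sum2 card_lessThan)
  hence "iota 1 2 (den Copy) = unvec 1 2 ` {\<lambda>j. phi 0 + (\<Sum>k<(1::nat). q k * phi (if j < 3 then 1 else 0)) | q. True}"
    by (rule iota_param) auto
  also have "\<dots> = {([\<alpha>], [\<alpha>, \<alpha>]) | \<alpha>. True}"
    by (rule img_param[where W = "\<lambda>x k. hd (fst x)", symmetric]) (auto simp: unvec_simps sum1 sum2 card_lessThan)
  finally show ?thesis .
qed

lemma step_Copy: "step Copy i s u v s' \<longleftrightarrow> s = [] \<and> s' = [] \<and> (\<exists>a. u = [a] \<and> v = [a, a])"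
  by (auto elim: CopyE intro: s_Copy)

lemma op_Copy: "op_sem 1 2 Copy = kappa ` {([\<alpha>], [\<alpha>, \<alpha>]) | \<alpha>. True}"
proof (rule op_sem_stateless)
  fix x :: "'a fls list \<times> 'a fls list"
  show "x \<in> {([\<alpha>], [\<alpha>, \<alpha>]) | \<alpha>. True} \<longleftrightarrow> (length (fst x) = 1 \<and> length (snd x) = 2 \<and>
               (\<forall>i. step Copy i [] (fst (kappa x i)) (snd (kappa x i)) []))"
    by (cases x) (auto simp: step_Copy kappa_def fls_eq_iff length_Suc_conv numeral_2_eq_2)
qed simp_all

inductive_cases DiscE: "step Disc i s u v s'"

lemma step_Disc: "step Disc i s u v s' \<longleftrightarrow> s = [] \<and> s' = [] \<and> (\<exists>a. u = [a] \<and> v = [])"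
  by (auto elim: DiscE intro: step.intros)

lemma iota_Disc: "iota 1 0 (den Disc) = {([\<alpha>], []) | \<alpha>. True}"
proof -
  have "den Disc = unvec 1 0 ` {\<lambda>j. (\<lambda>j. 0) j + (\<Sum>k<(1::nat). p k * (\<lambda>k j. if j < 1 then 1 else 0) k j) | p. True}"
    by (rule img_param[where W = "\<lambda>x k. hd (fst x)"]) (auto simp: unvec_simps sum1 sum2 card_lessThan algebra_simps)
  hence "iota 1 0 (den Disc) = unvec 1 0 ` {\<lambda>j. phi ((\<lambda>j. 0) j) + (\<Sum>k<(1::nat). q k * phi ((\<lambda>k j. if j < 1 then 1 else 0) k j)) | q. True}"
    by (rule iota_param) auto
  also have "\<dots> = {([\<alpha>], []) | \<alpha>. True}"
    by (rule img_param[where W = "\<lambda>x k. hd (fst x)", symmetric]) (auto simp: unvec_simps sum1 sum2 card_lessThan phi_const algebra_simps)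
  finally show ?thesis .
qed

lemma op_Disc: "op_sem 1 0 Disc = kappa ` {([\<alpha>], []) | \<alpha>. True}"
proof (rule op_sem_stateless)
  fix x :: "'a fls list \<times> 'a fls list"
  show "x \<in> {([\<alpha>], []) | \<alpha>. True} \<longleftrightarrow> (length (fst x) = 1 \<and> length (snd x) = 0 \<and>
               (\<forall>i. step Disc i [] (fst (kappa x i)) (snd (kappa x i)) []))"
    by (cases x) (auto simp: step_Disc kappa_def fls_eq_iff length_Suc_conv numeral_2_eq_2)
qed simp_all

inductive_cases AmpE: "step (Amp r) i s u v s'"

lemma step_Amp: "step (Amp r) i s u v s' \<longleftrightarrow> s = [] \<and> s' = [] \<and> (\<exists>a. u = [a] \<and> v = [r * a])"
  by (auto elim: AmpE intro: step.intros)

lemma iota_Amp: "iota 1 1 (den (Amp r)) = {([\<alpha>], [fls_const r * \<alpha>]) | \<alpha>. True}"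
proof -
  have "den (Amp r) = unvec 1 1 ` {\<lambda>j. (\<lambda>j. 0) j + (\<Sum>k<(1::nat). p k * (\<lambda>k j. if j = 0 then 1 else if j = 1 then Fraction_Field.Fract [:r:] 1 else 0) k j) | p. True}"
    by (rule img_param[where W = "\<lambda>x k. hd (fst x)"]) (auto simp: unvec_simps sum1 sum2 card_lessThan algebra_simps)
  hence "iota 1 1 (den (Amp r)) = unvec 1 1 ` {\<lambda>j. phi ((\<lambda>j. 0) j) + (\<Sum>k<(1::nat). q k * phi ((\<lambda>k j. if j = 0 then 1 else if j = 1 then Fraction_Field.Fract [:r:] 1 else 0) k j)) | q. True}"
    by (rule iota_param) auto
  also have "\<dots> = {([\<alpha>], [fls_const r * \<alpha>]) | \<alpha>. True}"
    by (rule img_param[where W = "\<lambda>x k. hd (fst x)", symmetric]) (auto simp: unvec_simps sum1 sum2 card_lessThan phi_const algebra_simps)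
  finally show ?thesis .
qed

lemma op_Amp: "op_sem 1 1 (Amp r) = kappa ` {([\<alpha>], [fls_const r * \<alpha>]) | \<alpha>. True}"
proof (rule op_sem_stateless)
  fix x :: "'a fls list \<times> 'a fls list"
  show "x \<in> {([\<alpha>], [fls_const r * \<alpha>]) | \<alpha>. True} \<longleftrightarrow> (length (fst x) = 1 \<and> length (snd x) = 1 \<and>
               (\<forall>i. step (Amp r) i [] (fst (kappa x i)) (snd (kappa x i)) []))"
    by (cases x) (auto simp: step_Amp kappa_def fls_eq_iff length_Suc_conv numeral_2_eq_2)
qed simp_all

inductive_cases AddE: "step Add i s u v s'"

lemma step_Add: "step Add i s u v s' \<longleftrightarrow> s = [] \<and> s' = [] \<and> (\<exists>a b. u = [a, b] \<and> v = [a + b])"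
  by (auto elim: AddE intro: step.intros)

lemma iota_Add: "iota 2 1 (den Add) = {([\<alpha>, \<beta>], [\<alpha> + \<beta>]) | \<alpha> \<beta>. True}"
proof -
  have "den Add = unvec 2 1 ` {\<lambda>j. (\<lambda>j. 0) j + (\<Sum>k<(2::nat). p k * (\<lambda>k j. if k = 0 then (if j = 0 \<or> j = 2 then 1 else 0) else (if j = 1 \<or> j = 2 then 1 else 0)) k j) | p. True}"
    by (rule img_param[where W = "\<lambda>x k. fst x ! k"]) (auto simp: unvec_simps sum1 sum2 card_lessThan algebra_simps)
  hence "iota 2 1 (den Add) = unvec 2 1 ` {\<lambda>j. phi ((\<lambda>j. 0) j) + (\<Sum>k<(2::nat). q k * phi ((\<lambda>k j. if k = 0 then (if j = 0 \<or> j = 2 then 1 else 0) else (if j = 1 \<or> j = 2 then 1 else 0)) k j)) | q. True}"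
    by (rule iota_param) auto
  also have "\<dots> = {([\<alpha>, \<beta>], [\<alpha> + \<beta>]) | \<alpha> \<beta>. True}"
    by (rule img_param[where W = "\<lambda>x k. fst x ! k", symmetric]) (auto simp: unvec_simps sum1 sum2 card_lessThan phi_const algebra_simps)
  finally show ?thesis .
qed

lemma op_Add: "op_sem 2 1 Add = kappa ` {([\<alpha>, \<beta>], [\<alpha> + \<beta>]) | \<alpha> \<beta>. True}"
proof (rule op_sem_stateless)
  fix x :: "'a fls list \<times> 'a fls list"
  show "x \<in> {([\<alpha>, \<beta>], [\<alpha> + \<beta>]) | \<alpha> \<beta>. True} \<longleftrightarrow> (length (fst x) = 2 \<and> length (snd x) = 1 \<and>
               (\<forall>i. step Add i [] (fst (kappa x i)) (snd (kappa x i)) []))"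
    by (cases x) (auto simp: step_Add kappa_def pw_eq pw_add all_conj_distrib length_Suc_conv numeral_2_eq_2)
qed simp_all

inductive_cases ZeroE: "step Zero i s u v s'"

lemma step_Zero: "step Zero i s u v s' \<longleftrightarrow> s = [] \<and> s' = [] \<and> u = [] \<and> v = [0]"
  by (auto elim: ZeroE intro: step.intros)

lemma iota_Zero: "iota 0 1 (den Zero) = {([], [0])}"
proof -
  have "den Zero = unvec 0 1 ` {\<lambda>j. (\<lambda>j. 0) j + (\<Sum>k<(0::nat). p k * (\<lambda>k j. 0) k j) | p. True}"
    by (rule img_param[where W = "\<lambda>x k. 0"]) (auto simp: unvec_simps sum1 sum2 card_lessThan algebra_simps)
  hence "iota 0 1 (den Zero) = unvec 0 1 ` {\<lambda>j. phi ((\<lambda>j. 0) j) + (\<Sum>k<(0::nat). q k * phi ((\<lambda>k j. 0) k j)) | q. True}"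
    by (rule iota_param) auto
  also have "\<dots> = {([], [0])}"
    by (rule img_param[where W = "\<lambda>x k. 0", symmetric]) (auto simp: unvec_simps sum1 sum2 card_lessThan phi_const algebra_simps)
  finally show ?thesis .
qed

lemma op_Zero: "op_sem 0 1 Zero = kappa ` {([], [0])}"
proof (rule op_sem_stateless)
  fix x :: "'a fls list \<times> 'a fls list"
  show "x \<in> {([], [0])} \<longleftrightarrow> (length (fst x) = 0 \<and> length (snd x) = 1 \<and>
               (\<forall>i. step Zero i [] (fst (kappa x i)) (snd (kappa x i)) []))"
    by (cases x) (auto simp: step_Zero kappa_def fls_eq_iff length_Suc_conv numeral_2_eq_2)
qed simp_all

inductive_cases OneE: "step One i s u v s'"

lemma step_One: "step One i s u v s' \<longleftrightarrow> s = [] \<and> s' = [] \<and> u = [] \<and> v = [if i = 0 then 1 else 0]"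
proof
  assume "step One i s u v s'" thus "s = [] \<and> s' = [] \<and> u = [] \<and> v = [if i = 0 then 1 else 0]" by (auto elim: OneE)
next
  assume "s = [] \<and> s' = [] \<and> u = [] \<and> v = [if i = 0 then 1 else 0]"
  hence e: "s = []" "s' = []" "u = []" "v = [if i = 0 then 1 else 0]" by auto
  show "step One i s u v s'" unfolding e by (rule s_One)
qed

lemma iota_One: "iota 0 1 (den One) = {([], [1])}"
proof -
  have "den One = unvec 0 1 ` {\<lambda>j. (\<lambda>j. if j = 0 then 1 else 0) j + (\<Sum>k<(0::nat). p k * (\<lambda>k j. 0) k j) | p. True}"
    by (rule img_param[where W = "\<lambda>x k. 0"]) (auto simp: unvec_simps sum1 sum2 card_lessThan algebra_simps)
  hence "iota 0 1 (den One) = unvec 0 1 ` {\<lambda>j. phi ((\<lambda>j. if j = 0 then 1 else 0) j) + (\<Sum>k<(0::nat). q k * phi ((\<lambda>k j. 0) k j)) | q. True}"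
    by (rule iota_param) auto
  also have "\<dots> = {([], [1])}"
    by (rule img_param[where W = "\<lambda>x k. 0", symmetric]) (auto simp: unvec_simps sum1 sum2 card_lessThan phi_const algebra_simps)
  finally show ?thesis .
qed

lemma op_One: "op_sem 0 1 One = kappa ` {([], [1])}"
proof (rule op_sem_stateless)
  fix x :: "'a fls list \<times> 'a fls list"
  show "x \<in> {([], [1])} \<longleftrightarrow> (length (fst x) = 0 \<and> length (snd x) = 1 \<and>
               (\<forall>i. step One i [] (fst (kappa x i)) (snd (kappa x i)) []))"
    by (cases x) (auto simp: step_One kappa_def fls_eq_iff length_Suc_conv numeral_2_eq_2)
qed simp_all

inductive_cases CopyOpE: "step CopyOp i s u v s'"

lemma step_CopyOp: "step CopyOp i s u v s' \<longleftrightarrow> s = [] \<and> s' = [] \<and> (\<exists>a. u = [a, a] \<and> v = [a])"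
  by (auto elim: CopyOpE intro: step.intros)

lemma iota_CopyOp: "iota 2 1 (den CopyOp) = {([\<alpha>, \<alpha>], [\<alpha>]) | \<alpha>. True}"
proof -
  have "den CopyOp = unvec 2 1 ` {\<lambda>j. (\<lambda>j. 0) j + (\<Sum>k<(1::nat). p k * (\<lambda>k j. if j < 3 then 1 else 0) k j) | p. True}"
    by (rule img_param[where W = "\<lambda>x k. hd (snd x)"]) (auto simp: unvec_simps sum1 sum2 card_lessThan algebra_simps)
  hence "iota 2 1 (den CopyOp) = unvec 2 1 ` {\<lambda>j. phi ((\<lambda>j. 0) j) + (\<Sum>k<(1::nat). q k * phi ((\<lambda>k j. if j < 3 then 1 else 0) k j)) | q. True}"
    by (rule iota_param) auto
  also have "\<dots> = {([\<alpha>, \<alpha>], [\<alpha>]) | \<alpha>. True}"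
    by (rule img_param[where W = "\<lambda>x k. hd (snd x)", symmetric]) (auto simp: unvec_simps sum1 sum2 card_lessThan phi_const algebra_simps)
  finally show ?thesis .
qed

lemma op_CopyOp: "op_sem 2 1 CopyOp = kappa ` {([\<alpha>, \<alpha>], [\<alpha>]) | \<alpha>. True}"
proof (rule op_sem_stateless)
  fix x :: "'a fls list \<times> 'a fls list"
  show "x \<in> {([\<alpha>, \<alpha>], [\<alpha>]) | \<alpha>. True} \<longleftrightarrow> (length (fst x) = 2 \<and> length (snd x) = 1 \<and>
               (\<forall>i. step CopyOp i [] (fst (kappa x i)) (snd (kappa x i)) []))"
    by (cases x) (auto simp: step_CopyOp kappa_def fls_eq_iff length_Suc_conv numeral_2_eq_2)
qed simp_all

inductive_cases DiscOpE: "step DiscOp i s u v s'"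

lemma step_DiscOp: "step DiscOp i s u v s' \<longleftrightarrow> s = [] \<and> s' = [] \<and> (\<exists>a. u = [] \<and> v = [a])"
  by (auto elim: DiscOpE intro: step.intros)

lemma iota_DiscOp: "iota 0 1 (den DiscOp) = {([], [\<alpha>]) | \<alpha>. True}"
proof -
  have "den DiscOp = unvec 0 1 ` {\<lambda>j. (\<lambda>j. 0) j + (\<Sum>k<(1::nat). p k * (\<lambda>k j. if j < 1 then 1 else 0) k j) | p. True}"
    by (rule img_param[where W = "\<lambda>x k. hd (snd x)"]) (auto simp: unvec_simps sum1 sum2 card_lessThan algebra_simps)
  hence "iota 0 1 (den DiscOp) = unvec 0 1 ` {\<lambda>j. phi ((\<lambda>j. 0) j) + (\<Sum>k<(1::nat). q k * phi ((\<lambda>k j. if j < 1 then 1 else 0) k j)) | q. True}"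
    by (rule iota_param) auto
  also have "\<dots> = {([], [\<alpha>]) | \<alpha>. True}"
    by (rule img_param[where W = "\<lambda>x k. hd (snd x)", symmetric]) (auto simp: unvec_simps sum1 sum2 card_lessThan phi_const algebra_simps)
  finally show ?thesis .
qed

lemma op_DiscOp: "op_sem 0 1 DiscOp = kappa ` {([], [\<alpha>]) | \<alpha>. True}"
proof (rule op_sem_stateless)
  fix x :: "'a fls list \<times> 'a fls list"
  show "x \<in> {([], [\<alpha>]) | \<alpha>. True} \<longleftrightarrow> (length (fst x) = 0 \<and> length (snd x) = 1 \<and>
               (\<forall>i. step DiscOp i [] (fst (kappa x i)) (snd (kappa x i)) []))"
    by (cases x) (auto simp: step_DiscOp kappa_def fls_eq_iff length_Suc_conv numeral_2_eq_2)
qed simp_all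

inductive_cases AmpOpE: "step (AmpOp r) i s u v s'"

lemma step_AmpOp: "step (AmpOp r) i s u v s' \<longleftrightarrow> s = [] \<and> s' = [] \<and> (\<exists>a. u = [r * a] \<and> v = [a])"
  by (auto elim: AmpOpE intro: step.intros)

lemma iota_AmpOp: "iota 1 1 (den (AmpOp r)) = {([fls_const r * \<alpha>], [\<alpha>]) | \<alpha>. True}"
proof -
  have "den (AmpOp r) = unvec 1 1 ` {\<lambda>j. (\<lambda>j. 0) j + (\<Sum>k<(1::nat). p k * (\<lambda>k j. if j = 0 then Fraction_Field.Fract [:r:] 1 else if j = 1 then 1 else 0) k j) | p. True}"
    by (rule img_param[where W = "\<lambda>x k. hd (snd x)"]) (auto simp: unvec_simps sum1 sum2 card_lessThan algebra_simps)
  hence "iota 1 1 (den (AmpOp r)) = unvec 1 1 ` {\<lambda>j. phi ((\<lambda>j. 0) j) + (\<Sum>k<(1::nat). q k * phi ((\<lambda>k j. if j = 0 then Fraction_Field.Fract [:r:] 1 else if j = 1 then 1 else 0) k j)) | q. True}"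
    by (rule iota_param) auto
  also have "\<dots> = {([fls_const r * \<alpha>], [\<alpha>]) | \<alpha>. True}"
    by (rule img_param[where W = "\<lambda>x k. hd (snd x)", symmetric]) (auto simp: unvec_simps sum1 sum2 card_lessThan phi_const algebra_simps)
  finally show ?thesis .
qed

lemma op_AmpOp: "op_sem 1 1 (AmpOp r) = kappa ` {([fls_const r * \<alpha>], [\<alpha>]) | \<alpha>. True}"
proof (rule op_sem_stateless)
  fix x :: "'a fls list \<times> 'a fls list"
  show "x \<in> {([fls_const r * \<alpha>], [\<alpha>]) | \<alpha>. True} \<longleftrightarrow> (length (fst x) = 1 \<and> length (snd x) = 1 \<and>
               (\<forall>i. step (AmpOp r) i [] (fst (kappa x i)) (snd (kappa x i)) []))"
    by (cases x) (auto simp: step_AmpOp kappa_def fls_eq_iff length_Suc_conv numeral_2_eq_2)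
qed simp_all

inductive_cases AddOpE: "step AddOp i s u v s'"

lemma step_AddOp: "step AddOp i s u v s' \<longleftrightarrow> s = [] \<and> s' = [] \<and> (\<exists>a b. u = [a + b] \<and> v = [a, b])"
  by (auto elim: AddOpE intro: step.intros)

lemma iota_AddOp: "iota 1 2 (den AddOp) = {([\<alpha> + \<beta>], [\<alpha>, \<beta>]) | \<alpha> \<beta>. True}"
proof -
  have "den AddOp = unvec 1 2 ` {\<lambda>j. (\<lambda>j. 0) j + (\<Sum>k<(2::nat). p k * (\<lambda>k j. if k = 0 then (if j = 0 \<or> j = 1 then 1 else 0) else (if j = 0 \<or> j = 2 then 1 else 0)) k j) | p. True}"
    by (rule img_param[where W = "\<lambda>x k. snd x ! k"]) (auto simp: unvec_simps sum1 sum2 card_lessThan algebra_simps)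
  hence "iota 1 2 (den AddOp) = unvec 1 2 ` {\<lambda>j. phi ((\<lambda>j. 0) j) + (\<Sum>k<(2::nat). q k * phi ((\<lambda>k j. if k = 0 then (if j = 0 \<or> j = 1 then 1 else 0) else (if j = 0 \<or> j = 2 then 1 else 0)) k j)) | q. True}"
    by (rule iota_param) auto
  also have "\<dots> = {([\<alpha> + \<beta>], [\<alpha>, \<beta>]) | \<alpha> \<beta>. True}"
    by (rule img_param[where W = "\<lambda>x k. snd x ! k", symmetric]) (auto simp: unvec_simps sum1 sum2 card_lessThan phi_const algebra_simps)
  finally show ?thesis .
qed

lemma op_AddOp: "op_sem 1 2 AddOp = kappa ` {([\<alpha> + \<beta>], [\<alpha>, \<beta>]) | \<alpha> \<beta>. True}"
proof (rule op_sem_stateless)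
  fix x :: "'a fls list \<times> 'a fls list"
  show "x \<in> {([\<alpha> + \<beta>], [\<alpha>, \<beta>]) | \<alpha> \<beta>. True} \<longleftrightarrow> (length (fst x) = 1 \<and> length (snd x) = 2 \<and>
               (\<forall>i. step AddOp i [] (fst (kappa x i)) (snd (kappa x i)) []))"
    by (cases x) (auto simp: step_AddOp kappa_def pw_eq pw_add all_conj_distrib length_Suc_conv numeral_2_eq_2)
qed simp_all

inductive_cases ZeroOpE: "step ZeroOp i s u v s'"

lemma step_ZeroOp: "step ZeroOp i s u v s' \<longleftrightarrow> s = [] \<and> s' = [] \<and> u = [0] \<and> v = []"
  by (auto elim: ZeroOpE intro: step.intros)

lemma iota_ZeroOp: "iota 1 0 (den ZeroOp) = {([0], [])}"
proof -
  have "den ZeroOp = unvec 1 0 ` {\<lambda>j. (\<lambda>j. 0) j + (\<Sum>k<(0::nat). p k * (\<lambda>k j. 0) k j) | p. True}"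
    by (rule img_param[where W = "\<lambda>x k. 0"]) (auto simp: unvec_simps sum1 sum2 card_lessThan algebra_simps)
  hence "iota 1 0 (den ZeroOp) = unvec 1 0 ` {\<lambda>j. phi ((\<lambda>j. 0) j) + (\<Sum>k<(0::nat). q k * phi ((\<lambda>k j. 0) k j)) | q. True}"
    by (rule iota_param) auto
  also have "\<dots> = {([0], [])}"
    by (rule img_param[where W = "\<lambda>x k. 0", symmetric]) (auto simp: unvec_simps sum1 sum2 card_lessThan phi_const algebra_simps)
  finally show ?thesis .
qed

lemma op_ZeroOp: "op_sem 1 0 ZeroOp = kappa ` {([0], [])}"
proof (rule op_sem_stateless)
  fix x :: "'a fls list \<times> 'a fls list"
  show "x \<in> {([0], [])} \<longleftrightarrow> (length (fst x) = 1 \<and> length (snd x) = 0 \<and>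
               (\<forall>i. step ZeroOp i [] (fst (kappa x i)) (snd (kappa x i)) []))"
    by (cases x) (auto simp: step_ZeroOp kappa_def fls_eq_iff length_Suc_conv numeral_2_eq_2)
qed simp_all

inductive_cases OneOpE: "step OneOp i s u v s'"

lemma step_OneOp: "step OneOp i s u v s' \<longleftrightarrow> s = [] \<and> s' = [] \<and> u = [if i = 0 then 1 else 0] \<and> v = []"
proof
  assume "step OneOp i s u v s'" thus "s = [] \<and> s' = [] \<and> u = [if i = 0 then 1 else 0] \<and> v = []" by (auto elim: OneOpE)
next
  assume "s = [] \<and> s' = [] \<and> u = [if i = 0 then 1 else 0] \<and> v = []"
  hence e: "s = []" "s' = []" "u = [if i = 0 then 1 else 0]" "v = []" by auto
  show "step OneOp i s u v s'" unfolding e by (rule s_OneOp)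
qed

lemma iota_OneOp: "iota 1 0 (den OneOp) = {([1], [])}"
proof -
  have "den OneOp = unvec 1 0 ` {\<lambda>j. (\<lambda>j. if j = 0 then 1 else 0) j + (\<Sum>k<(0::nat). p k * (\<lambda>k j. 0) k j) | p. True}"
    by (rule img_param[where W = "\<lambda>x k. 0"]) (auto simp: unvec_simps sum1 sum2 card_lessThan algebra_simps)
  hence "iota 1 0 (den OneOp) = unvec 1 0 ` {\<lambda>j. phi ((\<lambda>j. if j = 0 then 1 else 0) j) + (\<Sum>k<(0::nat). q k * phi ((\<lambda>k j. 0) k j)) | q. True}"
    by (rule iota_param) auto
  also have "\<dots> = {([1], [])}"
    by (rule img_param[where W = "\<lambda>x k. 0", symmetric]) (auto simp: unvec_simps sum1 sum2 card_lessThan phi_const algebra_simps)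
  finally show ?thesis .
qed

lemma op_OneOp: "op_sem 1 0 OneOp = kappa ` {([1], [])}"
proof (rule op_sem_stateless)
  fix x :: "'a fls list \<times> 'a fls list"
  show "x \<in> {([1], [])} \<longleftrightarrow> (length (fst x) = 1 \<and> length (snd x) = 0 \<and>
               (\<forall>i. step OneOp i [] (fst (kappa x i)) (snd (kappa x i)) []))"
    by (cases x) (auto simp: step_OneOp kappa_def fls_eq_iff length_Suc_conv numeral_2_eq_2)
qed simp_all

inductive_cases Id0E: "step Id0 i s u v s'"

lemma step_Id0: "step Id0 i s u v s' \<longleftrightarrow> s = [] \<and> s' = [] \<and> u = [] \<and> v = []"
  by (auto elim: Id0E intro: step.intros)

lemma iota_Id0: "iota 0 0 (den Id0) = {([], [])}"
proof -
  have "den Id0 = unvec 0 0 ` {\<lambda>j. (\<lambda>j. 0) j + (\<Sum>k<(0::nat). p k * (\<lambda>k j. 0) k j) | p. True}"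
    by (rule img_param[where W = "\<lambda>x k. 0"]) (auto simp: unvec_simps sum1 sum2 card_lessThan algebra_simps)
  hence "iota 0 0 (den Id0) = unvec 0 0 ` {\<lambda>j. phi ((\<lambda>j. 0) j) + (\<Sum>k<(0::nat). q k * phi ((\<lambda>k j. 0) k j)) | q. True}"
    by (rule iota_param) auto
  also have "\<dots> = {([], [])}"
    by (rule img_param[where W = "\<lambda>x k. 0", symmetric]) (auto simp: unvec_simps sum1 sum2 card_lessThan phi_const algebra_simps)
  finally show ?thesis .
qed

lemma op_Id0: "op_sem 0 0 Id0 = kappa ` {([], [])}"
proof (rule op_sem_stateless)
  fix x :: "'a fls list \<times> 'a fls list"
  show "x \<in> {([], [])} \<longleftrightarrow> (length (fst x) = 0 \<and> length (snd x) = 0 \<and>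
               (\<forall>i. step Id0 i [] (fst (kappa x i)) (snd (kappa x i)) []))"
    by (cases x) (auto simp: step_Id0 kappa_def fls_eq_iff length_Suc_conv numeral_2_eq_2)
qed simp_all

inductive_cases Id1E: "step Id1 i s u v s'"

lemma step_Id1: "step Id1 i s u v s' \<longleftrightarrow> s = [] \<and> s' = [] \<and> (\<exists>a. u = [a] \<and> v = [a])"
  by (auto elim: Id1E intro: step.intros)

lemma iota_Id1: "iota 1 1 (den Id1) = {([\<alpha>], [\<alpha>]) | \<alpha>. True}"
proof -
  have "den Id1 = unvec 1 1 ` {\<lambda>j. (\<lambda>j. 0) j + (\<Sum>k<(1::nat). p k * (\<lambda>k j. if j < 2 then 1 else 0) k j) | p. True}"
    by (rule img_param[where W = "\<lambda>x k. hd (fst x)"]) (auto simp: unvec_simps sum1 sum2 card_lessThan algebra_simps)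
  hence "iota 1 1 (den Id1) = unvec 1 1 ` {\<lambda>j. phi ((\<lambda>j. 0) j) + (\<Sum>k<(1::nat). q k * phi ((\<lambda>k j. if j < 2 then 1 else 0) k j)) | q. True}"
    by (rule iota_param) auto
  also have "\<dots> = {([\<alpha>], [\<alpha>]) | \<alpha>. True}"
    by (rule img_param[where W = "\<lambda>x k. hd (fst x)", symmetric]) (auto simp: unvec_simps sum1 sum2 card_lessThan phi_const algebra_simps)
  finally show ?thesis .
qed

lemma op_Id1: "op_sem 1 1 Id1 = kappa ` {([\<alpha>], [\<alpha>]) | \<alpha>. True}"
proof (rule op_sem_stateless)
  fix x :: "'a fls list \<times> 'a fls list"
  show "x \<in> {([\<alpha>], [\<alpha>]) | \<alpha>. True} \<longleftrightarrow> (length (fst x) = 1 \<and> length (snd x) = 1 \<and>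
               (\<forall>i. step Id1 i [] (fst (kappa x i)) (snd (kappa x i)) []))"
    by (cases x) (auto simp: step_Id1 kappa_def fls_eq_iff length_Suc_conv numeral_2_eq_2)
qed simp_all

inductive_cases SwE: "step Sw i s u v s'"

lemma step_Sw: "step Sw i s u v s' \<longleftrightarrow> s = [] \<and> s' = [] \<and> (\<exists>a b. u = [a, b] \<and> v = [b, a])"
  by (auto elim: SwE intro: step.intros)

lemma iota_Sw: "iota 2 2 (den Sw) = {([\<alpha>, \<beta>], [\<beta>, \<alpha>]) | \<alpha> \<beta>. True}"
proof -
  have "den Sw = unvec 2 2 ` {\<lambda>j. (\<lambda>j. 0) j + (\<Sum>k<(2::nat). p k * (\<lambda>k j. if k = 0 then (if j = 0 \<or> j = 3 then 1 else 0) else (if j = 1 \<or> j = 2 then 1 else 0)) k j) | p. True}"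
    by (rule img_param[where W = "\<lambda>x k. fst x ! k"]) (auto simp: unvec_simps sum1 sum2 card_lessThan algebra_simps)
  hence "iota 2 2 (den Sw) = unvec 2 2 ` {\<lambda>j. phi ((\<lambda>j. 0) j) + (\<Sum>k<(2::nat). q k * phi ((\<lambda>k j. if k = 0 then (if j = 0 \<or> j = 3 then 1 else 0) else (if j = 1 \<or> j = 2 then 1 else 0)) k j)) | q. True}"
    by (rule iota_param) auto
  also have "\<dots> = {([\<alpha>, \<beta>], [\<beta>, \<alpha>]) | \<alpha> \<beta>. True}"
    by (rule img_param[where W = "\<lambda>x k. fst x ! k", symmetric]) (auto simp: unvec_simps sum1 sum2 card_lessThan phi_const algebra_simps)
  finally show ?thesis .
qed

lemma op_Sw: "op_sem 2 2 Sw = kappa ` {([\<alpha>, \<beta>], [\<beta>, \<alpha>]) | \<alpha> \<beta>. True}"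
proof (rule op_sem_stateless)
  fix x :: "'a fls list \<times> 'a fls list"
  show "x \<in> {([\<alpha>, \<beta>], [\<beta>, \<alpha>]) | \<alpha> \<beta>. True} \<longleftrightarrow> (length (fst x) = 2 \<and> length (snd x) = 2 \<and>
               (\<forall>i. step Sw i [] (fst (kappa x i)) (snd (kappa x i)) []))"
    by (cases x) (auto simp: step_Sw kappa_def pw_eq pw_add all_conj_distrib length_Suc_conv numeral_2_eq_2)
qed simp_all


inductive_cases RegE: "step Reg i s u v s'"
inductive_cases RegOpE: "step RegOp i s u v s'"

lemma step_Reg: "step Reg i s u v s' \<longleftrightarrow> (\<exists>a b. s = [b] \<and> u = [a] \<and> v = [b] \<and> s' = [a])"
  by (auto elim: RegE intro: step.intros)
lemma step_RegOp: "step RegOp i s u v s' \<longleftrightarrow> (\<exists>a b. s = [b] \<and> u = [b] \<and> v = [a] \<and> s' = [a])"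
  by (auto elim: RegOpE intro: step.intros)

lemma iota_Reg: "iota 1 1 (den Reg) = {([\<alpha>], [\<alpha> * fls_X]) | \<alpha>. True}"
proof -
  have "den Reg = unvec 1 1 ` {\<lambda>j. 0 + (\<Sum>k<(1::nat). p k * (if j = 0 then 1 else if j = 1 then Fraction_Field.Fract [:0,1:] 1 else 0)) | p. True}"
    by (rule img_param[where W = "\<lambda>x k. hd (fst x)"]) (auto simp: unvec_simps sum1)
  hence "iota 1 1 (den Reg) = unvec 1 1 ` {\<lambda>j. phi 0 + (\<Sum>k<(1::nat). q k * phi (if j = 0 then 1 else if j = 1 then Fraction_Field.Fract [:0,1:] 1 else 0)) | q. True}"
    by (rule iota_param) auto
  also have "\<dots> = {([\<alpha>], [\<alpha> * fls_X]) | \<alpha>. True}"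
    by (rule img_param[where W = "\<lambda>x k. hd (fst x)", symmetric]) (auto simp: unvec_simps sum1 phi_X)
  finally show ?thesis .
qed

lemma iota_RegOp: "iota 1 1 (den RegOp) = {([\<alpha> * fls_X], [\<alpha>]) | \<alpha>. True}"
proof -
  have "den RegOp = unvec 1 1 ` {\<lambda>j. 0 + (\<Sum>k<(1::nat). p k * (if j = 0 then Fraction_Field.Fract [:0,1:] 1 else if j = 1 then 1 else 0)) | p. True}"
    by (rule img_param[where W = "\<lambda>x k. hd (snd x)"]) (auto simp: unvec_simps sum1)
  hence "iota 1 1 (den RegOp) = unvec 1 1 ` {\<lambda>j. phi 0 + (\<Sum>k<(1::nat). q k * phi (if j = 0 then Fraction_Field.Fract [:0,1:] 1 else if j = 1 then 1 else 0)) | q. True}"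
    by (rule iota_param) auto
  also have "\<dots> = {([\<alpha> * fls_X], [\<alpha>]) | \<alpha>. True}"
    by (rule img_param[where W = "\<lambda>x k. hd (snd x)", symmetric]) (auto simp: unvec_simps sum1 phi_X)
  finally show ?thesis .
qed

lemma fls_mult_X_nth: "fls_nth ((\<alpha>::'a::field fls) * fls_X) i = fls_nth \<alpha> (i - 1)"
  by (simp add: fls_X_times_conv_shift)

lemma op_Reg: "op_sem 1 1 Reg = kappa ` {([\<alpha>::'a::field fls], [\<alpha> * fls_X]) | \<alpha>. True}"
proof
  show "op_sem 1 1 (Reg::'a circ) \<subseteq> kappa ` {([\<alpha>::'a fls], [\<alpha> * fls_X]) | \<alpha>. True}"
  proof
    fix \<sigma> assume "\<sigma> \<in> op_sem 1 1 (Reg::'a circ)"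
    then obtain t S where h: "t \<le> 0" "S t = [0]"
      "\<forall>i\<ge>t. step Reg i (S i) (fst (\<sigma> i)) (snd (\<sigma> i)) (S (i+1))" "\<forall>i<t. \<sigma> i = vzero 1 1"
      unfolding op_sem_comp compu_def by auto
    have stp: "\<exists>a b. S i = [b] \<and> fst (\<sigma> i) = [a] \<and> snd (\<sigma> i) = [b] \<and> S (i+1) = [a]" if "i \<ge> t" for i
      using h(3) that step_Reg by blast
    define a where "a = (\<lambda>i. if i < t then 0 else hd (fst (\<sigma> i)))"
    have az: "\<forall>i<t. a i = 0" by (simp add: a_def)
    have F: "fst (\<sigma> i) = [a i]" for i
      using stp[of i] h(4) by (cases "i < t") (auto simp: a_def vzero_def)
    have Sn: "snd (\<sigma> i) = [a (i - 1)]" for i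
    proof (cases "i < t")
      case True thus ?thesis using h(4) by (simp add: a_def vzero_def)
    next
      case False
      show ?thesis
      proof (cases "i = t")
        case True
        thus ?thesis using stp[of t] h(2) by (auto simp: a_def)
      next
        case False
        hence i1: "i - 1 \<ge> t" using \<open>\<not> i < t\<close> by simp
        obtain a' b where "S (i - 1) = [b]" "fst (\<sigma> (i - 1)) = [a']" "S (i - 1 + 1) = [a']" using stp[OF i1] by blast
        moreover obtain a'' b' where "S i = [b']" "snd (\<sigma> i) = [b']" using stp[of i] \<open>\<not> i < t\<close> by auto
        ultimately show ?thesis using F[of "i - 1"] by simp
      qed
    qed
    define \<alpha> where "\<alpha> = Abs_fls a"
    have an: "fls_nth \<alpha> i = a i" for i unfolding \<alpha>_def by (rule nth_Abs_fls_lower_bound) (rule az)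
    have "\<sigma> = kappa ([\<alpha>], [\<alpha> * fls_X])"
      by (rule ext) (simp add: kappa_def an fls_mult_X_nth prod_eq_iff F Sn)
    thus "\<sigma> \<in> kappa ` {([\<alpha>::'a fls], [\<alpha> * fls_X]) | \<alpha>. True}" by blast
  qed
  show "kappa ` {([\<alpha>::'a fls], [\<alpha> * fls_X]) | \<alpha>. True} \<subseteq> op_sem 1 1 (Reg::'a circ)"
  proof
    fix \<sigma> assume "\<sigma> \<in> kappa ` {([\<alpha>::'a fls], [\<alpha> * fls_X]) | \<alpha>. True}"
    then obtain \<alpha> where s: "\<sigma> = kappa ([\<alpha>], [\<alpha> * fls_X])" by blast
    obtain t where t: "t \<le> 0" "\<forall>\<beta>\<in>set [\<alpha>]. \<forall>i<t. fls_nth \<beta> i = 0" using fls_list_bound by blast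
    have "compu Reg 1 1 t \<sigma>" unfolding compu_def
    proof (rule exI[of _ "\<lambda>i. [fls_nth \<alpha> (i - 1)]"], intro conjI allI impI)
      show "[fls_nth \<alpha> (t - 1)] = replicate (nregs Reg) 0" using t by simp
    next
      fix i :: int assume "t \<le> i"
      have "step Reg i [fls_nth \<alpha> (i - 1)] [fls_nth \<alpha> i] [fls_nth \<alpha> (i - 1)] [fls_nth \<alpha> i]" by (rule s_Reg)
      thus "step Reg i [fls_nth \<alpha> (i - 1)] (fst (\<sigma> i)) (snd (\<sigma> i)) [fls_nth \<alpha> (i + 1 - 1)]"
        by (simp add: s kappa_def fls_mult_X_nth)
    next
      fix i :: int assume "i < t"
      thus "\<sigma> i = vzero 1 1" using t by (simp add: s kappa_def fls_mult_X_nth vzero_def)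
    qed
    thus "\<sigma> \<in> op_sem 1 1 (Reg::'a circ)" unfolding op_sem_comp using t(1) by blast
  qed
qed

lemma op_RegOp: "op_sem 1 1 RegOp = kappa ` {([(\<alpha>::'a::field fls) * fls_X], [\<alpha>]) | \<alpha>. True}"
proof
  show "op_sem 1 1 (RegOp::'a circ) \<subseteq> kappa ` {([(\<alpha>::'a fls) * fls_X], [\<alpha>]) | \<alpha>. True}"
  proof
    fix \<sigma> assume "\<sigma> \<in> op_sem 1 1 (RegOp::'a circ)"
    then obtain t S where h: "t \<le> 0" "S t = [0]"
      "\<forall>i\<ge>t. step RegOp i (S i) (fst (\<sigma> i)) (snd (\<sigma> i)) (S (i+1))" "\<forall>i<t. \<sigma> i = vzero 1 1"
      unfolding op_sem_comp compu_def by auto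
    have stp: "\<exists>a b. S i = [b] \<and> fst (\<sigma> i) = [b] \<and> snd (\<sigma> i) = [a] \<and> S (i+1) = [a]" if "i \<ge> t" for i
      using h(3) that step_RegOp by blast
    define a where "a = (\<lambda>i. if i < t then 0 else hd (snd (\<sigma> i)))"
    have az: "\<forall>i<t. a i = 0" by (simp add: a_def)
    have F: "snd (\<sigma> i) = [a i]" for i
      using stp[of i] h(4) by (cases "i < t") (auto simp: a_def vzero_def)
    have Sn: "fst (\<sigma> i) = [a (i - 1)]" for i
    proof (cases "i < t")
      case True thus ?thesis using h(4) by (simp add: a_def vzero_def)
    next
      case False
      show ?thesis
      proof (cases "i = t")
        case True
        thus ?thesis using stp[of t] h(2) by (auto simp: a_def)
      next
        case False
        hence i1: "i - 1 \<ge> t" using \<open>\<not> i < t\<close> by simp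
        obtain a' b where "S (i - 1) = [b]" "snd (\<sigma> (i - 1)) = [a']" "S (i - 1 + 1) = [a']" using stp[OF i1] by blast
        moreover obtain a'' b' where "S i = [b']" "fst (\<sigma> i) = [b']" using stp[of i] \<open>\<not> i < t\<close> by auto
        ultimately show ?thesis using F[of "i - 1"] by simp
      qed
    qed
    define \<alpha> where "\<alpha> = Abs_fls a"
    have an: "fls_nth \<alpha> i = a i" for i unfolding \<alpha>_def by (rule nth_Abs_fls_lower_bound) (rule az)
    have "\<sigma> = kappa ([\<alpha> * fls_X], [\<alpha>])"
      by (rule ext) (simp add: kappa_def an fls_mult_X_nth prod_eq_iff F Sn)
    thus "\<sigma> \<in> kappa ` {([(\<alpha>::'a fls) * fls_X], [\<alpha>]) | \<alpha>. True}" by blast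
  qed
  show "kappa ` {([(\<alpha>::'a fls) * fls_X], [\<alpha>]) | \<alpha>. True} \<subseteq> op_sem 1 1 (RegOp::'a circ)"
  proof
    fix \<sigma> assume "\<sigma> \<in> kappa ` {([(\<alpha>::'a fls) * fls_X], [\<alpha>]) | \<alpha>. True}"
    then obtain \<alpha> where s: "\<sigma> = kappa ([\<alpha> * fls_X], [\<alpha>])" by blast
    obtain t where t: "t \<le> 0" "\<forall>\<beta>\<in>set [\<alpha>]. \<forall>i<t. fls_nth \<beta> i = 0" using fls_list_bound by blast
    have "compu RegOp 1 1 t \<sigma>" unfolding compu_def
    proof (rule exI[of _ "\<lambda>i. [fls_nth \<alpha> (i - 1)]"], intro conjI allI impI)
      show "[fls_nth \<alpha> (t - 1)] = replicate (nregs RegOp) 0" using t by simp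
    next
      fix i :: int assume "t \<le> i"
      have "step RegOp i [fls_nth \<alpha> (i - 1)] [fls_nth \<alpha> (i - 1)] [fls_nth \<alpha> i] [fls_nth \<alpha> i]" by (rule s_RegOp)
      thus "step RegOp i [fls_nth \<alpha> (i - 1)] (fst (\<sigma> i)) (snd (\<sigma> i)) [fls_nth \<alpha> (i + 1 - 1)]"
        by (simp add: s kappa_def fls_mult_X_nth)
    next
      fix i :: int assume "i < t"
      thus "\<sigma> i = vzero 1 1" using t by (simp add: s kappa_def fls_mult_X_nth vzero_def)
    qed
    thus "\<sigma> \<in> op_sem 1 1 (RegOp::'a circ)" unfolding op_sem_comp using t(1) by blast
  qed
qed


theorem theorem3:
  fixes c :: "'k::field circ" and n m :: nat
  assumes "sort c = Some (n, m)"
  shows "op_sem n m c = kappa ` iota n m (den c)"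
  using assms
proof (induction c arbitrary: n m)
  case (Seq c d)
  obtain k where s: "sort c = Some (n, k)" "sort d = Some (k, m)" using sort_SeqD[OF Seq.prems] by blast
  have LR: "lens n k (den c)" and LS: "lens k m (den d)" using den_lens s by blast+
  have AR: "affL (den c)" and AS: "affL (den d)" using den_aff s by blast+
  have L1: "\<forall>x\<in>iota n k (den c). length (snd x) = k" using iota_lens[OF LR] unfolding lens_def by blast
  have L2: "\<forall>x\<in>iota k m (den d). length (fst x) = k" using iota_lens[OF LS] unfolding lens_def by blast
  have "op_sem n m (Seq c d) = tseq (op_sem n k c) (op_sem k m d)" by (rule op_sem_seq[OF s])
  also have "\<dots> = tseq (kappa ` iota n k (den c)) (kappa ` iota k m (den d))"
  proof -
    have "op_sem n k c = kappa ` iota n k (den c)" by (rule Seq.IH(1)[OF s(1)])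
    moreover have "op_sem k m d = kappa ` iota k m (den d)" by (rule Seq.IH(2)[OF s(2)])
    ultimately show ?thesis by simp
  qed
  also have "\<dots> = kappa ` rel_seq (iota n k (den c)) (iota k m (den d))" by (rule kappa_seq[OF L1 L2, symmetric])
  also have "\<dots> = kappa ` iota n m (den (Seq c d))"
    unfolding den.simps by (rule arg_cong[where f = "image kappa", OF iota_seq[OF LR LS AR AS, symmetric]])
  finally show ?case .
next
  case (Par c d)
  obtain n1 m1 n2 m2 where s: "sort c = Some (n1, m1)" "sort d = Some (n2, m2)" "n = n1 + n2" "m = m1 + m2"
    using sort_ParD[OF Par.prems] by blast
  have LR: "lens n1 m1 (den c)" and LS: "lens n2 m2 (den d)" using den_lens s by blast+
  have "op_sem n m (Par c d) = tpar (op_sem n1 m1 c) (op_sem n2 m2 d)" unfolding s(3,4) by (rule op_sem_par[OF s(1,2)])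
  also have "\<dots> = tpar (kappa ` iota n1 m1 (den c)) (kappa ` iota n2 m2 (den d))"
  proof -
    have "op_sem n1 m1 c = kappa ` iota n1 m1 (den c)" by (rule Par.IH(1)[OF s(1)])
    moreover have "op_sem n2 m2 d = kappa ` iota n2 m2 (den d)" by (rule Par.IH(2)[OF s(2)])
    ultimately show ?thesis by simp
  qed
  also have "\<dots> = kappa ` rel_par (iota n1 m1 (den c)) (iota n2 m2 (den d))" by (rule kappa_par[symmetric])
  also have "\<dots> = kappa ` iota n m (den (Par c d))"
    unfolding den.simps s(3,4) by (rule arg_cong[where f = "image kappa", OF iota_par[OF LR LS, symmetric]])
  finally show ?case .
next
  case Copy
  hence "n = 1" "m = 2" by simp_all
  thus ?case by (simp only: op_Copy iota_Copy)
next
  case Disc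
  hence "n = 1" "m = 0" by simp_all
  thus ?case by (simp only: op_Disc iota_Disc)
next
  case (Amp r)
  hence "n = 1" "m = 1" by simp_all
  thus ?case by (simp only: op_Amp iota_Amp)
next
  case Reg
  hence "n = 1" "m = 1" by simp_all
  thus ?case by (simp only: op_Reg iota_Reg)
next
  case Add
  hence "n = 2" "m = 1" by simp_all
  thus ?case by (simp only: op_Add iota_Add)
next
  case Zero
  hence "n = 0" "m = 1" by simp_all
  thus ?case by (simp only: op_Zero iota_Zero)
next
  case One
  hence "n = 0" "m = 1" by simp_all
  thus ?case by (simp only: op_One iota_One)
next
  case CopyOp
  hence "n = 2" "m = 1" by simp_all
  thus ?case by (simp only: op_CopyOp iota_CopyOp)
next
  case DiscOp
  hence "n = 0" "m = 1" by simp_all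
  thus ?case by (simp only: op_DiscOp iota_DiscOp)
next
  case (AmpOp r)
  hence "n = 1" "m = 1" by simp_all
  thus ?case by (simp only: op_AmpOp iota_AmpOp)
next
  case RegOp
  hence "n = 1" "m = 1" by simp_all
  thus ?case by (simp only: op_RegOp iota_RegOp)
next
  case AddOp
  hence "n = 1" "m = 2" by simp_all
  thus ?case by (simp only: op_AddOp iota_AddOp)
next
  case ZeroOp
  hence "n = 1" "m = 0" by simp_all
  thus ?case by (simp only: op_ZeroOp iota_ZeroOp)
next
  case OneOp
  hence "n = 1" "m = 0" by simp_all
  thus ?case by (simp only: op_OneOp iota_OneOp)
next
  case Id0
  hence "n = 0" "m = 0" by simp_all
  thus ?case by (simp only: op_Id0 iota_Id0)
next
  case Id1
  hence "n = 1" "m = 1" by simp_all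
  thus ?case by (simp only: op_Id1 iota_Id1)
next
  case Sw
  hence "n = 2" "m = 2" by simp_all
  thus ?case by (simp only: op_Sw iota_Sw)
qed

end
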